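(* Let $k\in[K]$. Under (A1), (A2), (A3) and $\log p=o(n^{1/4}/\sqrt{\log n})$, $$\Big\|\frac1n\sum_{i=1}^n\Big(\frac{\gamma_{i,k}(\hat{\boldsymbol{\theta}})}{\hat\sigma_k^2}-\frac{\gamma_{i,k}(\boldsymbol{\theta})}{\sigma_k^2}\Big)(y_i-\boldsymbol{x}_i^T\boldsymbol{\beta}_k)\boldsymbol{x}_i\Big\|_\infty=o_p(1).$$
   Context: Setting. Data $(\boldsymbol{x}_i,y_i)\in\mathbb{R}^p\times\mathbb{R}$, $i\in[n]$, are i.i.d. draws from the mixture of experts (MoE) model with $K$ components: a latent label $z\in[K]$ satisfies $\mathbb{P}(z=k\mid\boldsymbol{x})=\pi_k(\boldsymbol{x})=\exp(\boldsymbol{x}^T\boldsymbol{\alpha}_k)/\sum_{\ell=1}^K\exp(\boldsymbol{x}^T\boldsymbol{\alpha}_\ell)$, and $y\mid\boldsymbol{x},z=k\sim N(\boldsymbol{x}^T\boldsymbol{\beta}_k,\sigma_k^2)$. The true parameter is $\boldsymbol{\theta}=(\{\boldsymbol{\beta}_k,\boldsymbol{\alpha}_k,\sigma_k\}_{k\in[K]})$. Asymptotics: $n\to\infty$, $p=p(n)\to\infty$, $K$ fixed. Let $\phi_k(\boldsymbol{x},y)=\frac{1}{\sqrt{2\pi}\sigma_k}\exp\!\big(-\frac{(y-\boldsymbol{x}^T\boldsymbol{\beta}_k)^2}{2\sigma_k^2}\big)$ and define the responsibilities $\gamma_{i,k}(\boldsymbol{\theta})=\pi_k(\boldsymbol{x}_i)\phi_k(\boldsymbol{x}_i,y_i)/\sum_{\ell=1}^K\pi_\ell(\boldsymbol{x}_i)\phi_\ell(\boldsymbol{x}_i,y_i)$;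 $\gamma_{i,k}(\hat{\boldsymbol{\theta}})$ denotes the same expression with all parameters replaced by those of $\hat{\boldsymbol{\theta}}=(\{\hat{\boldsymbol{\beta}}_k,\hat{\boldsymbol{\alpha}}_k,\hat\sigma_k\}_{k\in[K]})$, an arbitrary estimator of $\boldsymbol{\theta}$. Assumptions. (A1) $\max_{k\in[K]}\big(\|\hat{\boldsymbol{\beta}}_k-\boldsymbol{\beta}_k\|_1+\|\hat{\boldsymbol{\alpha}}_k-\boldsymbol{\alpha}_k\|_1+|\hat\sigma_k-\sigma_k|\big)=O_p(\eta_{\rm est})$ for a deterministic sequence $\eta_{\rm est}$ with $\sqrt{n}\log(np)\eta_{\rm est}^2=o(1)$. (A2) There is a positive semidefinite $\boldsymbol{\Sigma}\in\mathbb{R}^{p\times p}$ with $\|\boldsymbol{\Sigma}\|_{\rm op}\le C_\Sigma$ for a constant $C_\Sigma$, and the vectors $\boldsymbol{\Sigma}^{-1/2}\boldsymbol{x}_i$ are independent, mean zero, sub-Gaussian with sub-Gaussian norm $O(1)$. (A3) The $\sigma_k^2$ are strictly positive bounded constants and $\max_{k,\ell\in[K]}\|\boldsymbol{\beta}_k-\boldsymbol{\beta}_\ell\|_2=O(1)$. *)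

theory Defs
  imports "HOL-Probability.Probability" "HOL-Library.Landau_Symbols"
begin

text \<open>Vectors in R^p are represented as functions nat => real, only the
  coordinates j < p being relevant; p x p matrices as nat => nat => real.
  Mixture components are indexed by k < K (i.e. [K] = {0..<K}).\<close>

definition inner_p :: "nat \<Rightarrow> (nat \<Rightarrow> real) \<Rightarrow> (nat \<Rightarrow> real) \<Rightarrow> real" where
  "inner_p p u v = (\<Sum>j<p. u j * v j)"

definition norm1_p :: "nat \<Rightarrow> (nat \<Rightarrow> real) \<Rightarrow> real" where
  "norm1_p p u = (\<Sum>j<p. \<bar>u j\<bar>)"

definition norm2_p :: "nat \<Rightarrow> (nat \<Rightarrow> real) \<Rightarrow> real" where
  "norm2_p p u = sqrt (\<Sum>j<p. (u j)\<^sup>2)"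

definition matvec :: "nat \<Rightarrow> (nat \<Rightarrow> nat \<Rightarrow> real) \<Rightarrow> (nat \<Rightarrow> real) \<Rightarrow> (nat \<Rightarrow> real)" where
  "matvec p A u = (\<lambda>i. \<Sum>j<p. A i j * u j)"

definition is_inv_sqrt :: "nat \<Rightarrow> (nat \<Rightarrow> nat \<Rightarrow> real) \<Rightarrow> (nat \<Rightarrow> nat \<Rightarrow> real) \<Rightarrow> bool" where
  "is_inv_sqrt p R S \<longleftrightarrow>
     (\<forall>i<p. \<forall>j<p. R i j = R j i) \<and>
     (\<forall>u. (\<exists>j<p. u j \<noteq> 0) \<longrightarrow> inner_p p u (matvec p R u) > 0) \<and>
     (\<forall>i<p. \<forall>j<p. (\<Sum>a<p. \<Sum>b<p. R i a * S a b * R b j) = (if i = j then 1 else 0))"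

definition gate :: "nat \<Rightarrow> nat \<Rightarrow> (nat \<Rightarrow> nat \<Rightarrow> real) \<Rightarrow> (nat \<Rightarrow> real) \<Rightarrow> nat \<Rightarrow> real" where
  "gate K p alpha x k = exp (inner_p p x (alpha k)) / (\<Sum>l<K. exp (inner_p p x (alpha l)))"

definition comp_dens :: "nat \<Rightarrow> (nat \<Rightarrow> nat \<Rightarrow> real) \<Rightarrow> (nat \<Rightarrow> real) \<Rightarrow> (nat \<Rightarrow> real) \<Rightarrow> real \<Rightarrow> nat \<Rightarrow> real" where
  "comp_dens p beta sg x y k =
     1 / (sqrt (2 * pi) * sg k) * exp (- ((y - inner_p p x (beta k))\<^sup>2) / (2 * (sg k)\<^sup>2))"

definition resp :: "nat \<Rightarrow> nat \<Rightarrow> (nat \<Rightarrow> nat \<Rightarrow> real) \<Rightarrow> (nat \<Rightarrow> nat \<Rightarrow> real) \<Rightarrow> (nat \<Rightarrow> real)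
                    \<Rightarrow> (nat \<Rightarrow> real) \<Rightarrow> real \<Rightarrow> nat \<Rightarrow> real" where
  "resp K p alpha beta sg x y k =
     gate K p alpha x k * comp_dens p beta sg x y k /
     (\<Sum>l<K. gate K p alpha x l * comp_dens p beta sg x y l)"

definition moe_density :: "nat \<Rightarrow> nat \<Rightarrow> (nat \<Rightarrow> nat \<Rightarrow> real) \<Rightarrow> (nat \<Rightarrow> nat \<Rightarrow> real) \<Rightarrow> (nat \<Rightarrow> real)
                    \<Rightarrow> (nat \<Rightarrow> real) \<Rightarrow> real \<Rightarrow> real" where
  "moe_density K p alpha beta sg x y = (\<Sum>l<K. gate K p alpha x l * comp_dens p beta sg x y l)"

definition psi2_admissible :: "'a measure \<Rightarrow> ('a \<Rightarrow> real) \<Rightarrow> real \<Rightarrow> bool" where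
  "psi2_admissible M Z t \<longleftrightarrow> t > 0 \<and> integrable M (\<lambda>\<omega>. exp ((Z \<omega> / t)\<^sup>2)) \<and>
      (\<integral>\<omega>. exp ((Z \<omega> / t)\<^sup>2) \<partial>M) \<le> 2"

definition subgaussian :: "'a measure \<Rightarrow> ('a \<Rightarrow> real) \<Rightarrow> bool" where
  "subgaussian M Z \<longleftrightarrow> (\<exists>t. psi2_admissible M Z t)"

definition psi2_norm :: "'a measure \<Rightarrow> ('a \<Rightarrow> real) \<Rightarrow> real" where
  "psi2_norm M Z = Inf {t. psi2_admissible M Z t}"

definition o_p1 :: "'a measure \<Rightarrow> (nat \<Rightarrow> 'a \<Rightarrow> real) \<Rightarrow> bool" where
  "o_p1 M Z \<longleftrightarrow> (\<forall>\<epsilon>>0. (\<lambda>n. measure M {\<omega> \<in> space M. \<bar>Z n \<omega>\<bar> > \<epsilon>}) \<longlonglongrightarrow> 0)"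

definition O_p :: "'a measure \<Rightarrow> (nat \<Rightarrow> 'a \<Rightarrow> real) \<Rightarrow> (nat \<Rightarrow> real) \<Rightarrow> bool" where
  "O_p M Z eta \<longleftrightarrow> (\<forall>\<epsilon>>0. \<exists>C N. \<forall>n\<ge>N. measure M {\<omega> \<in> space M. \<bar>Z n \<omega>\<bar> > C * eta n} < \<epsilon>)"

end

theory Submission
  imports Defs "HOL-Real_Asymp.Real_Asymp"
begin

lemma ratio_perturb:
  fixes w w' :: "nat \<Rightarrow> real" and K k :: nat and \<delta> :: real
  assumes k: "k < K" and wpos: "\<forall>l<K. w l > 0"
    and bnd: "\<forall>l<K. exp(-\<delta>)*w l \<le> w' l \<and> w' l \<le> exp \<delta> * w l" and d: "\<delta> \<ge> 0"
  shows "\<bar>w' k / (\<Sum>l<K. w' l) - w k / (\<Sum>l<K. w l)\<bar> \<le> 8*\<delta>"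
proof -
  define S where "S = (\<Sum>l<K. w l)"
  define S' where "S' = (\<Sum>l<K. w' l)"
  have w'pos: "\<forall>l<K. w' l > 0" using wpos bnd by (meson exp_gt_zero less_le_trans mult_pos_pos)
  have Spos: "S > 0" unfolding S_def using k wpos by (intro sum_pos) auto
  have S'pos: "S' > 0" unfolding S'_def using k w'pos by (intro sum_pos) auto
  have wkS: "w k \<le> S" unfolding S_def using k wpos
    by (intro member_le_sum) auto
  have wkS': "w' k \<le> S'" unfolding S'_def using k w'pos
    by (intro member_le_sum) auto
  have S'lo: "exp(-\<delta>) * S \<le> S'" unfolding S_def S'_def sum_distrib_left
    using bnd by (intro sum_mono) auto
  have S'hi: "S' \<le> exp \<delta> * S" unfolding S_def S'_def sum_distrib_left
    using bnd by (intro sum_mono) auto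
  define r where "r = w k / S"
  define r' where "r' = w' k / S'"
  have r01: "0 \<le> r" "r \<le> 1" unfolding r_def using Spos wkS wpos k by (auto simp: field_simps)
  have r'01: "0 \<le> r'" "r' \<le> 1" unfolding r'_def using S'pos wkS' w'pos k by (auto simp: field_simps)
  have up: "r' \<le> exp (2*\<delta>) * r"
  proof -
    have "w' k \<le> exp \<delta> * w k" using bnd k by auto
    moreover have "exp (-\<delta>) * S \<le> S'" by (rule S'lo)
    ultimately have "w' k / S' \<le> (exp \<delta> * w k) / (exp (-\<delta>) * S)"
      using Spos S'pos w'pos k by (intro frac_le) auto
    also have "\<dots> = exp (2*\<delta>) * (w k / S)"
      by (simp add: exp_minus field_simps exp_add[symmetric])
    finally show ?thesis unfolding r_def r'_def .
  qed
  have lo: "exp (-2*\<delta>) * r \<le> r'"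
  proof -
    have "exp (-\<delta>) * w k \<le> w' k" using bnd k by auto
    have "(exp (-\<delta>) * w k) / (exp \<delta> * S) \<le> w' k / S'"
      using Spos S'pos w'pos k bnd S'hi wpos by (intro frac_le) auto
    moreover have "(exp (-\<delta>) * w k) / (exp \<delta> * S) = exp (-2*\<delta>) * (w k / S)"
      by (simp add: exp_minus field_simps exp_add[symmetric])
    ultimately show ?thesis unfolding r_def r'_def by simp
  qed
  have A: "r' - r \<le> 8*\<delta>"
  proof (cases "\<delta> \<ge> 1/8")
    case True then show ?thesis using r01 r'01 by linarith
  next
    case False
    have "norm (2*\<delta>) \<le> 1/2" using False d by auto
    from exp_bound_lemma[OF this] have "exp (2*\<delta>) \<le> 1 + 4*\<delta>" using d by simp
    then have "exp (2*\<delta>) * r \<le> r + 4*\<delta>*r" by (metis distrib_right mult_1 mult_right_mono r01(1))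
    moreover have "4*\<delta>*r \<le> 4*\<delta>" using r01 d by (simp add: mult_left_le)
    ultimately show ?thesis using up d by linarith
  qed
  have B: "r - r' \<le> 8*\<delta>"
  proof -
    have "exp (-2*\<delta>) \<ge> 1 - 2*\<delta>" using exp_ge_add_one_self[of "-2*\<delta>"] by simp
    then have "exp (-2*\<delta>) * r \<ge> r - 2*\<delta>*r" using r01 by (metis left_diff_distrib mult_1 mult_right_mono)
    moreover have "2*\<delta>*r \<le> 2*\<delta>" using r01 d by (simp add: mult_left_le)
    ultimately show ?thesis using lo d by linarith
  qed
  show ?thesis using A B unfolding r_def r'_def S_def S'_def by linarith
qed

lemma inner_le_max_norm1:
  assumes "\<forall>j<p. \<bar>x j\<bar> \<le> m"
  shows "\<bar>inner_p p x v\<bar> \<le> m * norm1_p p v"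
proof -
  have "\<bar>inner_p p x v\<bar> \<le> (\<Sum>j<p. \<bar>x j * v j\<bar>)" unfolding inner_p_def by (rule sum_abs)
  also have "\<dots> \<le> (\<Sum>j<p. m * \<bar>v j\<bar>)" using assms
    by (intro sum_mono) (auto simp: abs_mult intro: mult_right_mono)
  finally show ?thesis unfolding norm1_p_def by (simp add: sum_distrib_left)
qed

lemma inner_diff: "inner_p p x u - inner_p p x v = inner_p p x (\<lambda>j. u j - v j)"
  unfolding inner_p_def by (simp add: sum_subtractf right_diff_distrib)

lemma ln_diff_bound:
  fixes s tg th D :: real
  assumes "s > 0" "tg \<ge> s" "\<bar>th - tg\<bar> \<le> D" "D \<le> s/2"
  shows "\<bar>ln tg - ln th\<bar> \<le> 2 * D/s"
proof -
  have thpos: "th \<ge> tg/2" using assms by auto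
  have tgpos: "tg > 0" using assms by auto
  have thp: "th > 0" using thpos tgpos by linarith
  have 1: "ln tg - ln th \<le> (tg - th)/th"
    using ln_le_minus_one[of "tg/th"] tgpos thp by (simp add: ln_div field_simps)
  have 2: "ln th - ln tg \<le> (th - tg)/tg"
    using ln_le_minus_one[of "th/tg"] tgpos thp by (simp add: ln_div field_simps)
  have "(tg - th)/th \<le> D/(s/2)"
    using assms thp thpos by (intro frac_le) auto
  moreover have "(th - tg)/tg \<le> D/(s/2)"
    using assms thp tgpos by (intro frac_le) auto
  moreover have "D/(s/2) = 2 * D/s" by simp
  ultimately show ?thesis using 1 2 by (simp only: abs_le_iff) linarith
qed

lemma inv_sq_bound:
  fixes s tg th D :: real
  assumes "s > 0" "tg \<ge> s" "\<bar>th - tg\<bar> \<le> D" "D \<le> s/2"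
  shows "\<bar>1/th\<^sup>2 - 1/tg\<^sup>2\<bar> \<le> 10 * D/s^3" and "1/th\<^sup>2 \<le> 4/s\<^sup>2"
proof -
  have tgpos: "tg > 0" using assms by auto
  have thl: "th \<ge> tg/2" using assms by auto
  have thp: "th > 0" using thl tgpos by linarith
  have thu: "th \<le> 3 * tg/2" using assms by auto
  have eq: "1/th\<^sup>2 - 1/tg\<^sup>2 = (tg - th) * (tg + th)/(th\<^sup>2 * tg\<^sup>2)"
    using thp tgpos by (simp add: field_simps power2_eq_square)
  have "\<bar>(tg - th) * (tg + th)\<bar> = \<bar>th - tg\<bar> * (tg + th)" using thp tgpos by (simp add: abs_mult abs_minus_commute)
  also have "\<dots> \<le> D * (5 * tg/2)" using assms thp thu by (intro mult_mono) auto
  finally have "\<bar>(tg - th) * (tg + th)\<bar> \<le> D * (5 * tg/2)" .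
  moreover have "th\<^sup>2 * tg\<^sup>2 \<ge> (tg/2)\<^sup>2 * tg\<^sup>2"
    using thl tgpos by (intro mult_right_mono power_mono) auto
  ultimately have "\<bar>1/th\<^sup>2 - 1/tg\<^sup>2\<bar> \<le> D * (5 * tg/2) / ((tg/2)\<^sup>2 * tg\<^sup>2)"
    unfolding eq abs_divide using tgpos thp assms
    by (intro frac_le) (auto simp: abs_mult)
  also have "\<dots> = 10 * D / tg^3" using tgpos by (simp add: field_simps power2_eq_square power3_eq_cube)
  also have "\<dots> \<le> 10 * D / s^3" using assms tgpos
    by (intro divide_left_mono power_mono) auto
  finally show "\<bar>1/th\<^sup>2 - 1/tg\<^sup>2\<bar> \<le> 10 * D/s^3" .
  show "1/th\<^sup>2 \<le> 4/s\<^sup>2"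
  proof -
    have "th \<ge> s/2" using thl assms by linarith
    then have "th\<^sup>2 \<ge> (s/2)\<^sup>2" using assms by (intro power_mono) auto
    then show ?thesis using assms thp by (simp add: field_simps power2_eq_square)
  qed
qed

lemma q_bound:
  fixes e e' d a s tg th D dd :: real
  assumes "\<bar>e\<bar> \<le> a" "e' = e - d" "\<bar>d\<bar> \<le> dd" "s > 0" "tg \<ge> s" "\<bar>th - tg\<bar> \<le> D" "D \<le> s/2"
  shows "\<bar>e'\<^sup>2/(2 * th\<^sup>2) - e\<^sup>2/(2 * tg\<^sup>2)\<bar> \<le> (2/s\<^sup>2) * (2 * a * dd + dd\<^sup>2) + 5 * a\<^sup>2 * D/s^3"
proof -
  have ib: "\<bar>1/th\<^sup>2 - 1/tg\<^sup>2\<bar> \<le> 10 * D/s^3" "1/th\<^sup>2 \<le> 4/s\<^sup>2"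
    using inv_sq_bound[OF assms(4,5,6,7)] by auto
  have th0: "th \<noteq> 0" using assms(4-7) by auto
  have eq: "e'\<^sup>2/(2 * th\<^sup>2) - e\<^sup>2/(2 * tg\<^sup>2) = (e'\<^sup>2 - e\<^sup>2) * (1/th\<^sup>2) / 2 + e\<^sup>2 * (1/th\<^sup>2 - 1/tg\<^sup>2) / 2"
    using th0 by (simp add: field_simps)
  have a0: "a \<ge> 0" using assms(1) by linarith
  have dd0: "dd \<ge> 0" using assms(3) by linarith
  have "e'\<^sup>2 - e\<^sup>2 = - (d * (2 * e - d))" unfolding assms(2)
    by (simp add: power2_eq_square algebra_simps)
  then have "\<bar>e'\<^sup>2 - e\<^sup>2\<bar> = \<bar>d\<bar> * \<bar>2 * e - d\<bar>"
    by (simp add: abs_mult)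
  also have "\<dots> \<le> dd * (2 * a + dd)"
    using assms a0 dd0 by (intro mult_mono) (auto simp: abs_le_iff)
  finally have 1: "\<bar>e'\<^sup>2 - e\<^sup>2\<bar> \<le> dd * (2 * a + dd)" .
  have "\<bar>(e'\<^sup>2 - e\<^sup>2) * (1/th\<^sup>2) / 2\<bar> \<le> dd * (2 * a + dd) * (4/s\<^sup>2) / 2"
  proof -
    have "\<bar>(e'\<^sup>2 - e\<^sup>2) * (1/th\<^sup>2) / 2\<bar> = \<bar>e'\<^sup>2 - e\<^sup>2\<bar> * (1/th\<^sup>2) / 2" by (simp add: abs_mult)
    also have "\<dots> \<le> dd * (2 * a + dd) * (4/s\<^sup>2) / 2"
      using 1 ib(2) a0 dd0 by (intro divide_right_mono mult_mono) auto
    finally show ?thesis .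
  qed
  moreover have "\<bar>e\<^sup>2 * (1/th\<^sup>2 - 1/tg\<^sup>2) / 2\<bar> \<le> a\<^sup>2 * (10 * D/s^3) / 2"
  proof -
    have "e\<^sup>2 \<le> a\<^sup>2" using assms(1) by (metis abs_ge_zero abs_le_square_iff abs_of_nonneg dual_order.trans)
    have "\<bar>e\<^sup>2 * (1/th\<^sup>2 - 1/tg\<^sup>2) / 2\<bar> = e\<^sup>2 * \<bar>1/th\<^sup>2 - 1/tg\<^sup>2\<bar> / 2" by (simp add: abs_mult)
    also have "\<dots> \<le> a\<^sup>2 * (10 * D/s^3) / 2"
      using ib(1) \<open>e\<^sup>2 \<le> a\<^sup>2\<close> by (intro divide_right_mono mult_mono) auto
    finally show ?thesis .
  qed
  ultimately have "\<bar>e'\<^sup>2/(2 * th\<^sup>2) - e\<^sup>2/(2 * tg\<^sup>2)\<bar> \<le> dd * (2 * a + dd) * (4/s\<^sup>2) / 2 + a\<^sup>2 * (10 * D/s^3) / 2"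
    unfolding eq by (rule order_trans[OF abs_triangle_ineq add_mono])
  also have "\<dots> = (2/s\<^sup>2) * (2 * a * dd + dd\<^sup>2) + 5 * a\<^sup>2 * D/s^3"
    using assms(4) by (simp add: field_simps power2_eq_square)
  finally show ?thesis .
qed

lemma resp_ratio:
  assumes "K > 0"
  shows "resp K p al be sg x y k =
    (exp (inner_p p x (al k)) * comp_dens p be sg x y k) / (\<Sum>l<K. exp (inner_p p x (al l)) * comp_dens p be sg x y l)"
proof -
  define S where "S = (\<Sum>l<K. exp (inner_p p x (al l)))"
  have "S > 0" unfolding S_def using assms by (intro sum_pos) auto
  then show ?thesis unfolding resp_def gate_def S_def[symmetric]
    by (simp add: sum_divide_distrib[symmetric] field_simps)
qed

lemma comp_dens_eq:
  "comp_dens p be sg x y l = 1 / (sqrt (2 * pi) * sg l) * exp (- ((y - inner_p p x (be l))\<^sup>2 / (2 * (sg l)\<^sup>2)))"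
  unfolding comp_dens_def by simp

lemma mono_mon:
  fixes u c a m :: real
  assumes "0 \<le> u" "u \<le> c" "1 \<le> c" "0 \<le> a" "0 \<le> m" "i \<le> 5" "p1 \<le> 3" "p2 \<le> 3"
  shows "u^i * a^p1 * m^p2 \<le> c^5 * (1+a)^3 * (1+m)^p2"
proof -
  have "u^i \<le> c^i" using assms by (intro power_mono) auto
  also have "\<dots> \<le> c^5" using assms by (intro power_increasing) auto
  finally have 1: "u^i \<le> c^5" .
  have "a^p1 \<le> (1+a)^p1" using assms by (intro power_mono) auto
  also have "\<dots> \<le> (1+a)^3" using assms by (intro power_increasing) auto
  finally have 2: "a^p1 \<le> (1+a)^3" .
  have 3: "m^p2 \<le> (1+m)^p2" using assms by (intro power_mono) auto
  show ?thesis using 1 2 3 assms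
    by (intro mult_mono) (auto intro!: mult_nonneg_nonneg)
qed

lemma sample_bound:
  fixes K p k :: nat and x :: "nat \<Rightarrow> real" and y :: real
    and al be alh beh :: "nat \<Rightarrow> nat \<Rightarrow> real" and sg sgh :: "nat \<Rightarrow> real" and s D m a :: real and j :: nat
  assumes k: "k < K" and s: "s > 0" and sgs: "\<forall>l<K. sg l \<ge> s" and Ds: "D \<le> s/2"
    and dbe: "\<forall>l<K. norm1_p p (\<lambda>j. beh l j - be l j) \<le> D"
    and dal: "\<forall>l<K. norm1_p p (\<lambda>j. alh l j - al l j) \<le> D"
    and dsg: "\<forall>l<K. \<bar>sgh l - sg l\<bar> \<le> D"
    and xm: "\<forall>j<p. \<bar>x j\<bar> \<le> m" and ya: "\<forall>l<K. \<bar>y - inner_p p x (be l)\<bar> \<le> a" and j: "j < p"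
  shows "\<bar>(resp K p alh beh sgh x y k / (sgh k)\<^sup>2 - resp K p al be sg x y k / (sg k)\<^sup>2)
           * (y - inner_p p x (be k)) * x j\<bar>
         \<le> 400 * (1 + 1/s)^5 * (D * (1+a)^3 * (1+m)^2 + D\<^sup>2 * (1+a)^3 * (1+m)^3)"
proof -
  have D0: "D \<ge> 0" using dsg k by (meson abs_ge_zero order_trans)
  have m0: "m \<ge> 0" using xm j by (meson abs_ge_zero order_trans)
  have a0: "a \<ge> 0" using ya k by (meson abs_ge_zero order_trans)
  have K0: "K > 0" using k by simp
  define u where "u = 1/s"
  have u0: "u > 0" unfolding u_def using s by simp
  define dd where "dd = m * D"
  have dd0: "dd \<ge> 0" unfolding dd_def using m0 D0 by simp
  define \<delta> where "\<delta> = m * D + 2 * D * u + ((2 * u\<^sup>2) * (2 * a * dd + dd\<^sup>2) + 5 * a\<^sup>2 * D * u^3)"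
  have \<delta>0: "\<delta> \<ge> 0" unfolding \<delta>_def using m0 D0 u0 a0 dd0 by simp
  define w where "w = (\<lambda>l. exp (inner_p p x (al l)) * comp_dens p be sg x y l)"
  define w' where "w' = (\<lambda>l. exp (inner_p p x (alh l)) * comp_dens p beh sgh x y l)"
  have sgpos: "\<forall>l<K. sg l > 0" using sgs s by (meson less_le_trans)
  have sghpos: "\<forall>l<K. sgh l > 0"
  proof (intro allI impI)
    fix l assume l: "l < K"
    have "sgh l \<ge> sg l - D" using dsg l by (auto simp: abs_le_iff)
    moreover have "sg l \<ge> s" using sgs l by auto
    ultimately show "sgh l > 0" using Ds s by linarith
  qed
  have wpos: "\<forall>l<K. w l > 0" unfolding w_def comp_dens_def using sgpos by auto
  have wb: "\<forall>l<K. exp(-\<delta>) * w l \<le> w' l \<and> w' l \<le> exp \<delta> * w l"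
  proof (intro allI impI)
    fix l assume l: "l < K"
    define A where "A = inner_p p x (al l)"
    define A' where "A' = inner_p p x (alh l)"
    define q where "q = (y - inner_p p x (be l))\<^sup>2 / (2 * (sg l)\<^sup>2)"
    define q' where "q' = (y - inner_p p x (beh l))\<^sup>2 / (2 * (sgh l)\<^sup>2)"
    define E where "E = (A' - A) + (ln (sg l) - ln (sgh l)) - (q' - q)"
    have sl: "sg l > 0" "sgh l > 0" using l sgpos sghpos by auto
    have eqw: "w' l = w l * exp E"
    proof -
      have "exp E = exp (A' - A) * (sg l / sgh l) * exp (q - q')"
        unfolding E_def using sl by (simp add: exp_add exp_diff ln_div[symmetric])
      then show ?thesis unfolding w_def w'_def comp_dens_eq A_def[symmetric] A'_def[symmetric]
          q_def[symmetric] q'_def[symmetric] using sl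
        by (simp add: exp_diff exp_minus field_simps)
    qed
    have b1: "\<bar>A' - A\<bar> \<le> m * D"
    proof -
      have "\<bar>A' - A\<bar> \<le> m * norm1_p p (\<lambda>j. alh l j - al l j)"
        unfolding A_def A'_def inner_diff by (rule inner_le_max_norm1[OF xm])
      also have "\<dots> \<le> m * D" using dal l m0 by (intro mult_left_mono) auto
      finally show ?thesis .
    qed
    have b2: "\<bar>ln (sg l) - ln (sgh l)\<bar> \<le> 2 * D * u"
      using ln_diff_bound[of s "sg l" "sgh l" D] s sgs dsg Ds l unfolding u_def by auto
    have b3: "\<bar>q' - q\<bar> \<le> (2/s\<^sup>2) * (2 * a * dd + dd\<^sup>2) + 5 * a\<^sup>2 * D/s^3"
    proof -
      have dbd: "\<bar>inner_p p x (beh l) - inner_p p x (be l)\<bar> \<le> dd"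
      proof -
        have "\<bar>inner_p p x (beh l) - inner_p p x (be l)\<bar> \<le> m * norm1_p p (\<lambda>j. beh l j - be l j)"
          unfolding inner_diff by (rule inner_le_max_norm1[OF xm])
        also have "\<dots> \<le> m * D" using dbe l m0 by (intro mult_left_mono) auto
        finally show ?thesis unfolding dd_def .
      qed
      show ?thesis unfolding q_def q'_def
        by (rule q_bound[where d = "inner_p p x (beh l) - inner_p p x (be l)"])
          (use ya l dbd s sgs dsg Ds in auto)
    qed
    have "\<bar>E\<bar> \<le> \<delta>"
    proof -
      have "(2/s\<^sup>2) = 2 * u\<^sup>2" "5 * a\<^sup>2 * D/s^3 = 5 * a\<^sup>2 * D * u^3"
        unfolding u_def by (simp_all add: power_one_over field_simps)
      then show ?thesis unfolding E_def \<delta>_def using b1 b2 b3 by (simp add: abs_le_iff)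
    qed
    then have "exp (-\<delta>) \<le> exp E" "exp E \<le> exp \<delta>" by (auto simp: abs_le_iff)
    then show "exp(-\<delta>) * w l \<le> w' l \<and> w' l \<le> exp \<delta> * w l"
      unfolding eqw using wpos l by (auto simp: mult.commute intro: mult_left_mono)
  qed
  define r where "r = w k / (\<Sum>l<K. w l)"
  define r' where "r' = w' k / (\<Sum>l<K. w' l)"
  have rr: "\<bar>r' - r\<bar> \<le> 8 * \<delta>" unfolding r_def r'_def
    by (rule ratio_perturb[OF k wpos wb \<delta>0])
  have r01: "0 \<le> r" "r \<le> 1"
  proof -
    have "w k \<le> (\<Sum>l<K. w l)" using k wpos by (intro member_le_sum) auto
    moreover have "(\<Sum>l<K. w l) > 0" using k wpos by (intro sum_pos) auto
    ultimately show "0 \<le> r" "r \<le> 1" unfolding r_def using wpos k by auto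
  qed
  have respeq: "resp K p al be sg x y k = r" "resp K p alh beh sgh x y k = r'"
    unfolding r_def r'_def w_def w'_def using resp_ratio[OF K0] by auto
  have ib: "\<bar>1/(sgh k)\<^sup>2 - 1/(sg k)\<^sup>2\<bar> \<le> 10 * D/s^3" "1/(sgh k)\<^sup>2 \<le> 4/s\<^sup>2"
    using inv_sq_bound[of s "sg k" "sgh k" D] s sgs dsg Ds k by auto
  have main1: "\<bar>r'/(sgh k)\<^sup>2 - r/(sg k)\<^sup>2\<bar> \<le> 8 * \<delta> * (4 * u\<^sup>2) + 10 * D * u^3"
  proof -
    have eq: "r'/(sgh k)\<^sup>2 - r/(sg k)\<^sup>2 = (r' - r) * (1/(sgh k)\<^sup>2) + r * (1/(sgh k)\<^sup>2 - 1/(sg k)\<^sup>2)"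
      by (simp add: algebra_simps diff_divide_distrib)
    have "\<bar>(r' - r) * (1/(sgh k)\<^sup>2)\<bar> \<le> 8 * \<delta> * (4 * u\<^sup>2)"
    proof -
      have "\<bar>(r' - r) * (1/(sgh k)\<^sup>2)\<bar> = \<bar>r' - r\<bar> * (1/(sgh k)\<^sup>2)" by (simp add: abs_mult)
      also have "\<dots> \<le> 8 * \<delta> * (4/s\<^sup>2)" using rr ib(2) \<delta>0 by (intro mult_mono) auto
      finally show ?thesis unfolding u_def by (simp add: power_one_over)
    qed
    moreover have "\<bar>r * (1/(sgh k)\<^sup>2 - 1/(sg k)\<^sup>2)\<bar> \<le> 10 * D * u^3"
    proof -
      have "\<bar>r * (1/(sgh k)\<^sup>2 - 1/(sg k)\<^sup>2)\<bar> = r * \<bar>1/(sgh k)\<^sup>2 - 1/(sg k)\<^sup>2\<bar>" using r01 by (simp add: abs_mult)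
      also have "\<dots> \<le> 1 * (10 * D/s^3)" using r01 ib(1) by (intro mult_mono) auto
      finally show ?thesis unfolding u_def by (simp add: power_one_over)
    qed
    ultimately show ?thesis unfolding eq by (rule order_trans[OF abs_triangle_ineq add_mono])
  qed
  have ek: "\<bar>y - inner_p p x (be k)\<bar> \<le> a" using ya k by auto
  have xj: "\<bar>x j\<bar> \<le> m" using xm j by auto
  have "\<bar>(r'/(sgh k)\<^sup>2 - r/(sg k)\<^sup>2) * (y - inner_p p x (be k)) * x j\<bar>
        \<le> (8 * \<delta> * (4 * u\<^sup>2) + 10 * D * u^3) * a * m"
    unfolding abs_mult using main1 ek xj a0 m0 \<delta>0 D0 u0
    by (intro mult_mono) (auto intro!: add_nonneg_nonneg mult_nonneg_nonneg)
  also have "\<dots> = 32 * (u^2 * a^1 * m^2) * D + 64 * (u^3 * a^1 * m^1) * D + 128 * (u^4 * a^2 * m^2) * D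
     + 64 * (u^4 * a^1 * m^3) * D\<^sup>2 + 160 * (u^5 * a^3 * m^1) * D + 10 * (u^3 * a^1 * m^1) * D"
    unfolding \<delta>_def dd_def by (simp add: algebra_simps power2_eq_square power3_eq_cube power4_eq_xxxx
        numeral_eq_Suc)
  also have "\<dots> \<le> 394 * ((1 + 1/s)^5 * (1+a)^3 * (1+m)^2) * D + 64 * ((1 + 1/s)^5 * (1+a)^3 * (1+m)^3) * D\<^sup>2"
  proof -
    have c: "0 \<le> u" "u \<le> 1 + 1/s" "1 \<le> 1 + 1/s" using u0 s unfolding u_def by auto
    let ?B2 = "(1 + 1/s)^5 * (1+a)^3 * (1+m)^2"
    have m21: "(1+m)^1 \<le> (1+m)^2" using m0 by (intro power_increasing) auto
    have t1: "u^2 * a^1 * m^2 \<le> ?B2" using mono_mon[OF c, of a m 2 1 2] a0 m0 by simp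
    have "u^3 * a^1 * m^1 \<le> (1 + 1/s)^5 * (1+a)^3 * (1+m)^1" using mono_mon[OF c, of a m 3 1 1] a0 m0 by simp
    also have "\<dots> \<le> ?B2" using m21 a0 c by (intro mult_left_mono) auto
    finally have t2: "u^3 * a^1 * m^1 \<le> ?B2" .
    have t3: "u^4 * a^2 * m^2 \<le> ?B2" using mono_mon[OF c, of a m 4 2 2] a0 m0 by simp
    have t4: "u^4 * a^1 * m^3 \<le> (1 + 1/s)^5 * (1+a)^3 * (1+m)^3" using mono_mon[OF c, of a m 4 1 3] a0 m0 by simp
    have "u^5 * a^3 * m^1 \<le> (1 + 1/s)^5 * (1+a)^3 * (1+m)^1" using mono_mon[OF c, of a m 5 3 1] a0 m0 by simp
    also have "\<dots> \<le> ?B2" using m21 a0 c by (intro mult_left_mono) auto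
    finally have t5: "u^5 * a^3 * m^1 \<le> ?B2" .
    have D2: "D\<^sup>2 \<ge> 0" by simp
    show ?thesis
      using mult_right_mono[OF t1 D0] mult_right_mono[OF t2 D0] mult_right_mono[OF t3 D0]
        mult_right_mono[OF t4 D2] mult_right_mono[OF t5 D0] by linarith
  qed
  also have "\<dots> \<le> 400 * (1 + 1/s)^5 * (D * (1+a)^3 * (1+m)^2 + D\<^sup>2 * (1+a)^3 * (1+m)^3)"
  proof -
    have "0 \<le> (1 + 1/s)^5 * (1+a)^3 * (1+m)^2 * D" using s a0 m0 D0 by simp
    moreover have "0 \<le> (1 + 1/s)^5 * (1+a)^3 * (1+m)^3 * D\<^sup>2" using s a0 m0 D0 by simp
    ultimately show ?thesis by (simp add: algebra_simps)
  qed
  finally show ?thesis using respeq by simp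
qed

lemma markov_nn:
  fixes f :: "'a \<Rightarrow> real"
  assumes f: "f \<in> borel_measurable M" and t: "t > 0"
  shows "emeasure M {\<omega> \<in> space M. f \<omega> \<ge> t} \<le> (\<integral>\<^sup>+\<omega>. ennreal (f \<omega>) \<partial>M) / ennreal t"
proof -
  have S: "{\<omega> \<in> space M. f \<omega> \<ge> t} \<in> sets M" using f by measurable
  have "emeasure M {\<omega> \<in> space M. f \<omega> \<ge> t} = (\<integral>\<^sup>+\<omega>. indicator {\<omega> \<in> space M. f \<omega> \<ge> t} \<omega> \<partial>M)"
    using S by simp
  also have "\<dots> \<le> (\<integral>\<^sup>+\<omega>. ennreal (f \<omega>) / ennreal t \<partial>M)"
  proof (intro nn_integral_mono)
    fix \<omega> assume "\<omega> \<in> space M"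
    show "indicator {\<omega> \<in> space M. f \<omega> \<ge> t} \<omega> \<le> ennreal (f \<omega>) / ennreal t"
    proof (cases "f \<omega> \<ge> t")
      case True
      then have "ennreal t \<le> ennreal (f \<omega>)" by (simp add: ennreal_leI)
      have "ennreal (f \<omega>) / ennreal t = ennreal (f \<omega> / t)" using True t by (simp add: divide_ennreal)
      moreover have "f \<omega> / t \<ge> 1" using True t by simp
      ultimately have "1 \<le> ennreal (f \<omega>) / ennreal t" by (simp add: ennreal_leI del: ennreal_1 flip: ennreal_1)
      then show ?thesis by (auto simp: indicator_def)
    qed (auto simp: indicator_def)
  qed
  also have "\<dots> = (\<integral>\<^sup>+\<omega>. ennreal (f \<omega>) \<partial>M) / ennreal t"
    using f by (simp add: nn_integral_divide)
  finally show ?thesis .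
qed

lemma pow_le_exp:
  fixes v :: real and q :: nat
  assumes "v \<ge> 0" "q > 0"
  shows "v^q \<le> real q ^ q * exp v"
proof -
  have "(v / real q)^q \<le> (1 + v / real q)^q" using assms by (intro power_mono) auto
  also have "\<dots> \<le> exp v" using assms by (intro exp_ge_one_plus_x_over_n_power_n) auto
  finally have "(v / real q)^q \<le> exp v" .
  then have "v^q / real q ^ q \<le> exp v" by (simp add: power_divide)
  then show ?thesis using assms by (simp add: field_simps)
qed

lemma pow_le_split:
  fixes u L :: real and q :: nat
  assumes "u \<ge> 0" "L \<ge> 0" "q > 0"
  shows "u^q \<le> (2 * L)^q + (2 * real q)^q * exp (u - L)"
proof (cases "u \<le> 2 * L")
  case True
  then have "u^q \<le> (2 * L)^q" using assms by (intro power_mono) auto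
  moreover have "0 \<le> (2 * real q)^q * exp (u - L)" by simp
  ultimately show ?thesis by linarith
next
  case False
  have "(u/2)^q \<le> real q ^ q * exp (u/2)" using pow_le_exp[of "u/2" q] assms by auto
  moreover have "exp (u/2) \<le> exp (u - L)" using False by simp
  ultimately have "(u/2)^q \<le> real q ^ q * exp (u - L)"
    by (meson order_trans mult_left_mono zero_le_power of_nat_0_le_iff)
  then have "u^q \<le> 2^q * (real q ^ q * exp (u - L))" by (simp add: power_divide field_simps)
  moreover have "0 \<le> (2 * L)^q" using assms by simp
  ultimately show ?thesis by (simp add: power_mult_distrib mult.assoc)
qed

lemma (in prob_space) moment_from_exp:
  fixes Z :: "'a \<Rightarrow> real"
  assumes Z: "Z \<in> borel_measurable M" and T: "T > 0"
    and E: "(\<integral>\<^sup>+\<omega>. ennreal (exp ((Z \<omega> / T)\<^sup>2)) \<partial>M) \<le> 2" and q: "q > 0"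
  shows "(\<integral>\<^sup>+\<omega>. ennreal (\<bar>Z \<omega>\<bar>^(2 * q)) \<partial>M) \<le> ennreal (2 * real q^q * T^(2 * q))"
proof -
  have pw: "\<bar>Z \<omega>\<bar>^(2 * q) \<le> T^(2 * q) * real q^q * exp ((Z \<omega> / T)\<^sup>2)" for \<omega>
  proof -
    have "\<bar>Z \<omega>\<bar>^(2 * q) = T^(2 * q) * ((Z \<omega> / T)\<^sup>2)^q" using T
      by (simp add: power_mult power_divide power2_abs)
    also have "\<dots> \<le> T^(2 * q) * (real q^q * exp ((Z \<omega> / T)\<^sup>2))"
      using pow_le_exp[of "(Z \<omega> / T)\<^sup>2" q] q T by (intro mult_left_mono) auto
    finally show ?thesis by (simp add: mult.assoc)
  qed
  have "(\<integral>\<^sup>+\<omega>. ennreal (\<bar>Z \<omega>\<bar>^(2 * q)) \<partial>M) \<le> (\<integral>\<^sup>+\<omega>. ennreal (T^(2 * q) * real q^q) * ennreal (exp ((Z \<omega> / T)\<^sup>2)) \<partial>M)"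
    using pw T by (intro nn_integral_mono) (simp add: ennreal_mult'[symmetric] ennreal_leI)
  also have "\<dots> = ennreal (T^(2 * q) * real q^q) * (\<integral>\<^sup>+\<omega>. ennreal (exp ((Z \<omega> / T)\<^sup>2)) \<partial>M)"
  proof (intro nn_integral_cmult)
    have [measurable]: "Z \<in> borel_measurable M" by (rule Z)
    show "(\<lambda>\<omega>. ennreal (exp ((Z \<omega> / T)\<^sup>2))) \<in> borel_measurable M" by measurable
  qed
  also have "\<dots> \<le> ennreal (T^(2 * q) * real q^q) * 2" using E by (intro mult_left_mono) auto
  also have "\<dots> = ennreal (2 * real q^q * T^(2 * q))" using T
    by (simp add: ennreal_mult mult.commute mult.left_commute)
  finally show ?thesis .
qed

lemma Max_ins0_in:
  fixes f :: "nat \<Rightarrow> real"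
  shows "Max (insert 0 (f ` {..<p})) = 0 \<or> (\<exists>j<p. Max (insert 0 (f ` {..<p})) = f j)"
proof -
  have "Max (insert 0 (f ` {..<p})) \<in> insert 0 (f ` {..<p})" by (intro Max_in) auto
  then show ?thesis by auto
qed

lemma Max_ins0_ge: "j < (p::nat) \<Longrightarrow> (f j :: real) \<le> Max (insert 0 (f ` {..<p}))"
  by (intro Max_ge) (auto simp: finite_imageI)

lemma Max_ins0_nonneg: "(0::real) \<le> Max (insert 0 (f ` {..<(p::nat)}))"
  by (intro Max_ge) (auto simp: finite_imageI)

lemma (in prob_space) max_moment:
  fixes Z :: "nat \<Rightarrow> 'a \<Rightarrow> real"
  assumes Zm: "\<forall>j<p. Z j \<in> borel_measurable M" and T: "T > 0"
    and E: "\<forall>j<p. (\<integral>\<^sup>+\<omega>. ennreal (exp ((Z j \<omega> / T)\<^sup>2)) \<partial>M) \<le> 2" and q: "q > 0"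
  shows "(\<integral>\<^sup>+\<omega>. ennreal ((Max (insert 0 ((\<lambda>j. \<bar>Z j \<omega>\<bar>) ` {..<p})))^(2 * q)) \<partial>M)
     \<le> ennreal (T^(2 * q) * ((2 * ln (2 * (real p + 1)))^q + (2 * real q)^q))"
proof -
  define L where "L = ln (2 * (real p + 1))"
  have L0: "L \<ge> 0" unfolding L_def by simp
  have eL: "exp L = 2 * (real p + 1)" unfolding L_def by simp
  define B' where "B' = (2 * real q)^q / (2 * (real p + 1))"
  have B'0: "B' \<ge> 0" unfolding B'_def by simp
  define A where "A = T^(2 * q) * ((2 * L)^q + B')"
  define B where "B = T^(2 * q) * B'"
  have A0: "A \<ge> 0" unfolding A_def using T L0 B'0 by simp
  have B0: "B \<ge> 0" unfolding B_def using T B'0 by simp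
  have pw: "(Max (insert 0 ((\<lambda>j. \<bar>Z j \<omega>\<bar>) ` {..<p})))^(2 * q) \<le> A + (\<Sum>j<p. B * exp ((Z j \<omega> / T)\<^sup>2))" for \<omega>
  proof -
    define mm where "mm = Max (insert 0 ((\<lambda>j. \<bar>Z j \<omega>\<bar>) ` {..<p}))"
    define u where "u = (mm / T)\<^sup>2"
    have eu: "exp u \<le> 1 + (\<Sum>j<p. exp ((Z j \<omega> / T)\<^sup>2))"
    proof -
      have s0: "0 \<le> (\<Sum>j<p. exp ((Z j \<omega> / T)\<^sup>2))" by (intro sum_nonneg) auto
      from Max_ins0_in[of "\<lambda>j. \<bar>Z j \<omega>\<bar>" p] show ?thesis
      proof
        assume "Max (insert 0 ((\<lambda>j. \<bar>Z j \<omega>\<bar>) ` {..<p})) = 0"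
        then show ?thesis using s0 unfolding u_def mm_def by simp
      next
        assume "\<exists>j<p. Max (insert 0 ((\<lambda>j. \<bar>Z j \<omega>\<bar>) ` {..<p})) = \<bar>Z j \<omega>\<bar>"
        then obtain j where j: "j < p" "mm = \<bar>Z j \<omega>\<bar>" unfolding mm_def by auto
        have "exp u = exp ((Z j \<omega> / T)\<^sup>2)" unfolding u_def j by (simp add: power2_abs abs_divide power_divide)
        also have "\<dots> \<le> (\<Sum>j<p. exp ((Z j \<omega> / T)\<^sup>2))"
          using j by (intro member_le_sum) auto
        finally show ?thesis by simp
      qed
    qed
    have "u^q \<le> (2 * L)^q + (2 * real q)^q * exp (u - L)"
      by (rule pow_le_split) (use L0 q in \<open>auto simp: u_def\<close>)
    also have "exp (u - L) = exp u / (2 * (real p + 1))" using eL by (simp add: exp_diff)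
    finally have "u^q \<le> (2 * L)^q + B' * exp u" unfolding B'_def by (simp add: field_simps)
    also have "\<dots> \<le> (2 * L)^q + B' * (1 + (\<Sum>j<p. exp ((Z j \<omega> / T)\<^sup>2)))"
      using eu B'0 by (intro add_left_mono mult_left_mono) auto
    finally have uq: "u^q \<le> (2 * L)^q + B' * (1 + (\<Sum>j<p. exp ((Z j \<omega> / T)\<^sup>2)))" .
    have "mm^(2 * q) = T^(2 * q) * u^q" unfolding u_def using T by (simp add: power_mult power_divide)
    also have "\<dots> \<le> T^(2 * q) * ((2 * L)^q + B' * (1 + (\<Sum>j<p. exp ((Z j \<omega> / T)\<^sup>2))))"
      using uq T by (intro mult_left_mono) auto
    also have "\<dots> = A + (\<Sum>j<p. B * exp ((Z j \<omega> / T)\<^sup>2))"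
      unfolding A_def B_def by (simp add: algebra_simps sum_distrib_left)
    finally show ?thesis unfolding mm_def .
  qed
  have "(\<integral>\<^sup>+\<omega>. ennreal ((Max (insert 0 ((\<lambda>j. \<bar>Z j \<omega>\<bar>) ` {..<p})))^(2 * q)) \<partial>M)
      \<le> (\<integral>\<^sup>+\<omega>. ennreal A + (\<Sum>j<p. ennreal B * ennreal (exp ((Z j \<omega> / T)\<^sup>2))) \<partial>M)"
  proof (intro nn_integral_mono)
    fix \<omega>
    have "ennreal ((Max (insert 0 ((\<lambda>j. \<bar>Z j \<omega>\<bar>) ` {..<p})))^(2 * q)) \<le> ennreal (A + (\<Sum>j<p. B * exp ((Z j \<omega> / T)\<^sup>2)))"
      using pw by (rule ennreal_leI)
    also have "\<dots> = ennreal A + (\<Sum>j<p. ennreal B * ennreal (exp ((Z j \<omega> / T)\<^sup>2)))"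
      using A0 B0 by (simp add: ennreal_plus sum_nonneg ennreal_mult' sum_ennreal[symmetric] del: sum_ennreal)
    finally show "ennreal ((Max (insert 0 ((\<lambda>j. \<bar>Z j \<omega>\<bar>) ` {..<p})))^(2 * q)) \<le> ennreal A + (\<Sum>j<p. ennreal B * ennreal (exp ((Z j \<omega> / T)\<^sup>2)))" .
  qed
  also have "\<dots> = ennreal A + (\<Sum>j<p. ennreal B * (\<integral>\<^sup>+\<omega>. ennreal (exp ((Z j \<omega> / T)\<^sup>2)) \<partial>M))"
  proof -
    have m1: "\<And>j. j < p \<Longrightarrow> (\<lambda>\<omega>. ennreal (exp ((Z j \<omega> / T)\<^sup>2))) \<in> borel_measurable M"
    proof -
      fix j assume "j < p"
      then have [measurable]: "Z j \<in> borel_measurable M" using Zm by auto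
      show "(\<lambda>\<omega>. ennreal (exp ((Z j \<omega> / T)\<^sup>2))) \<in> borel_measurable M" by measurable
    qed
    have m2: "\<And>j. j < p \<Longrightarrow> (\<lambda>\<omega>. ennreal B * ennreal (exp ((Z j \<omega> / T)\<^sup>2))) \<in> borel_measurable M"
      using m1 by (auto intro!: borel_measurable_times_ennreal)
    have "(\<integral>\<^sup>+\<omega>. ennreal A + (\<Sum>j<p. ennreal B * ennreal (exp ((Z j \<omega> / T)\<^sup>2))) \<partial>M)
       = (\<integral>\<^sup>+\<omega>. ennreal A \<partial>M) + (\<integral>\<^sup>+\<omega>. (\<Sum>j<p. ennreal B * ennreal (exp ((Z j \<omega> / T)\<^sup>2))) \<partial>M)"
      using m2 by (intro nn_integral_add) (auto intro!: borel_measurable_sum)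
    also have "(\<integral>\<^sup>+\<omega>. (\<Sum>j<p. ennreal B * ennreal (exp ((Z j \<omega> / T)\<^sup>2))) \<partial>M)
       = (\<Sum>j<p. (\<integral>\<^sup>+\<omega>. ennreal B * ennreal (exp ((Z j \<omega> / T)\<^sup>2)) \<partial>M))"
      using m2 by (intro nn_integral_sum) auto
    also have "\<dots> = (\<Sum>j<p. ennreal B * (\<integral>\<^sup>+\<omega>. ennreal (exp ((Z j \<omega> / T)\<^sup>2)) \<partial>M))"
      using m1 by (intro sum.cong refl nn_integral_cmult) auto
    finally show ?thesis by (simp add: emeasure_space_1)
  qed
  also have "\<dots> \<le> ennreal A + (\<Sum>j<p. ennreal B * 2)"
    using E by (intro add_left_mono sum_mono mult_left_mono) auto
  also have "\<dots> = ennreal (A + 2 * real p * B)" using A0 B0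
    by (simp add: ennreal_plus ennreal_mult' ennreal_of_nat_eq_real_of_nat[symmetric] mult_ac)
  also have "\<dots> \<le> ennreal (T^(2 * q) * ((2 * ln (2 * (real p + 1)))^q + (2 * real q)^q))"
  proof (intro ennreal_leI)
    have "B' + 2 * real p * B' = (1 + 2 * real p) * B'" by (simp add: algebra_simps)
    also have "\<dots> = (2 * real q)^q * ((1 + 2 * real p) / (2 * (real p + 1)))"
      unfolding B'_def by simp
    also have "\<dots> \<le> (2 * real q)^q * 1" by (intro mult_left_mono) auto
    finally have "B' + 2 * real p * B' \<le> (2 * real q)^q" by simp
    then have "(2 * L)^q + (B' + 2 * real p * B') \<le> (2 * L)^q + (2 * real q)^q" by simp
    then have "T^(2 * q) * ((2 * L)^q + (B' + 2 * real p * B')) \<le> T^(2 * q) * ((2 * L)^q + (2 * real q)^q)"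
      using T by (intro mult_left_mono) auto
    moreover have "A + 2 * real p * B = T^(2 * q) * ((2 * L)^q + (B' + 2 * real p * B'))"
      unfolding A_def B_def by (simp add: distrib_left mult.left_commute)
    ultimately show "A + 2 * real p * B \<le> T^(2 * q) * ((2 * ln (2 * (real p + 1)))^q + (2 * real q)^q)"
      unfolding L_def by simp
  qed
  finally show ?thesis .
qed

lemma triple_sum:
  fixes A :: "nat \<Rightarrow> real" and B C :: "nat \<Rightarrow> nat \<Rightarrow> real" and v :: "nat \<Rightarrow> real"
  shows "(\<Sum>a<p. A a * (\<Sum>b<p. B a b * (\<Sum>c<p. C b c * v c))) = (\<Sum>c<p. (\<Sum>a<p. \<Sum>b<p. A a * B a b * C b c) * v c)"
proof -
  have "(\<Sum>a<p. A a * (\<Sum>b<p. B a b * (\<Sum>c<p. C b c * v c))) = (\<Sum>a<p. \<Sum>b<p. \<Sum>c<p. A a * B a b * C b c * v c)"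
    by (simp add: sum_distrib_left mult.assoc)
  also have "\<dots> = (\<Sum>a<p. \<Sum>c<p. \<Sum>b<p. A a * B a b * C b c * v c)"
    by (rule sum.cong[OF refl], rule sum.swap)
  also have "\<dots> = (\<Sum>c<p. \<Sum>a<p. \<Sum>b<p. A a * B a b * C b c * v c)"
    by (rule sum.swap)
  also have "\<dots> = (\<Sum>c<p. (\<Sum>a<p. \<Sum>b<p. A a * B a b * C b c) * v c)"
    by (simp add: sum_distrib_right)
  finally show ?thesis .
qed

lemma sym_swap:
  assumes "\<forall>i<p. \<forall>j<p. A i j = A j i"
  shows "inner_p p (matvec p A u) v = inner_p p u (matvec p A v)"
proof -
  have "inner_p p (matvec p A u) v = (\<Sum>i<p. \<Sum>j<p. A i j * u j * v i)"
    unfolding inner_p_def matvec_def by (simp add: sum_distrib_right)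
  also have "\<dots> = (\<Sum>j<p. \<Sum>i<p. A i j * u j * v i)" by (rule sum.swap)
  also have "\<dots> = (\<Sum>j<p. \<Sum>i<p. u j * (A j i * v i))"
    using assms by (intro sum.cong refl) (simp add: mult_ac)
  also have "\<dots> = inner_p p u (matvec p A v)"
    unfolding inner_p_def matvec_def by (simp add: sum_distrib_left)
  finally show ?thesis .
qed

lemma LA1:
  fixes R S :: "nat \<Rightarrow> nat \<Rightarrow> real"
  assumes inv: "is_inv_sqrt p R S"
  shows "\<forall>i<p. matvec p S (matvec p R (matvec p R x)) i = x i"
proof -
  define z where "z = (\<lambda>i. matvec p S (matvec p R (matvec p R x)) i - x i)"
  have RSR: "\<forall>i<p. \<forall>j<p. (\<Sum>a<p. \<Sum>b<p. R i a * S a b * R b j) = (if i = j then 1 else 0)"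
    using inv unfolding is_inv_sqrt_def by auto
  have Rz: "matvec p R z i = 0" if i: "i < p" for i
  proof -
    have "matvec p R z i = (\<Sum>a<p. R i a * (\<Sum>b<p. S a b * (\<Sum>c<p. R b c * matvec p R x c))) - matvec p R x i"
      unfolding z_def matvec_def by (simp add: right_diff_distrib sum_subtractf)
    also have "(\<Sum>a<p. R i a * (\<Sum>b<p. S a b * (\<Sum>c<p. R b c * matvec p R x c)))
        = (\<Sum>c<p. (\<Sum>a<p. \<Sum>b<p. R i a * S a b * R b c) * matvec p R x c)"
      by (rule triple_sum)
    also have "\<dots> = (\<Sum>c<p. (if i = c then 1 else 0) * matvec p R x c)"
      using RSR i by (intro sum.cong refl) auto
    also have "\<dots> = (\<Sum>c<p. if i = c then matvec p R x c else 0)" by (intro sum.cong) auto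
    also have "\<dots> = matvec p R x i" using i by (simp add: sum.delta)
    finally show ?thesis by simp
  qed
  have "inner_p p z (matvec p R z) = 0" unfolding inner_p_def using Rz by simp
  then have "\<not> (\<exists>j<p. z j \<noteq> 0)" using inv unfolding is_inv_sqrt_def by (metis less_irrefl)
  then show ?thesis unfolding z_def by auto
qed

definition wv :: "nat \<Rightarrow> (nat \<Rightarrow> nat \<Rightarrow> real) \<Rightarrow> (nat \<Rightarrow> nat \<Rightarrow> real) \<Rightarrow> (nat \<Rightarrow> real) \<Rightarrow> nat \<Rightarrow> real" where
  "wv p R S b = (\<lambda>c. \<Sum>j<p. \<Sum>a<p. b j * S j a * R a c)"

lemma LA2:
  assumes inv: "is_inv_sqrt p R S"
  shows "inner_p p x b = inner_p p (wv p R S b) (matvec p R x)"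
proof -
  have "inner_p p x b = (\<Sum>j<p. b j * matvec p S (matvec p R (matvec p R x)) j)"
    unfolding inner_p_def using LA1[OF inv, of x] by (intro sum.cong refl) (simp add: mult.commute)
  also have "\<dots> = (\<Sum>j<p. b j * (\<Sum>a<p. S j a * (\<Sum>c<p. R a c * matvec p R x c)))"
    unfolding matvec_def by simp
  also have "\<dots> = (\<Sum>c<p. (\<Sum>j<p. \<Sum>a<p. b j * S j a * R a c) * matvec p R x c)"
    by (rule triple_sum)
  also have "\<dots> = inner_p p (wv p R S b) (matvec p R x)" unfolding inner_p_def wv_def by simp
  finally show ?thesis .
qed

lemma norm2_sq: "(norm2_p p u)\<^sup>2 = (\<Sum>j<p. (u j)\<^sup>2)"
  unfolding norm2_p_def by (simp add: sum_nonneg)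

lemma LA3:
  assumes inv: "is_inv_sqrt p R S" and Ssym: "\<forall>i<p. \<forall>j<p. S i j = S j i"
    and Sop: "\<forall>u. norm2_p p (matvec p S u) \<le> C * norm2_p p u"
  shows "(norm2_p p (wv p R S b))\<^sup>2 \<le> C * (norm2_p p b)\<^sup>2"
proof -
  have Rsym: "\<forall>i<p. \<forall>j<p. R i j = R j i" using inv unfolding is_inv_sqrt_def by auto
  define Sb where "Sb = matvec p S b"
  have weq: "\<forall>c<p. wv p R S b c = matvec p R Sb c"
  proof (intro allI impI)
    fix c assume c: "c < p"
    have "wv p R S b c = (\<Sum>a<p. \<Sum>j<p. b j * S j a * R a c)" unfolding wv_def by (rule sum.swap)
    also have "\<dots> = (\<Sum>a<p. R c a * (\<Sum>j<p. S a j * b j))"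
      using Ssym Rsym c by (intro sum.cong refl) (auto simp: sum_distrib_left sum_distrib_right mult_ac)
    also have "\<dots> = matvec p R Sb c" unfolding Sb_def matvec_def by simp
    finally show "wv p R S b c = matvec p R Sb c" .
  qed
  have "(norm2_p p (wv p R S b))\<^sup>2 = inner_p p (matvec p R Sb) (matvec p R Sb)"
    unfolding norm2_sq inner_p_def using weq by (intro sum.cong refl) (simp add: power2_eq_square)
  also have "\<dots> = inner_p p Sb (matvec p R (matvec p R Sb))" by (rule sym_swap[OF Rsym])
  also have "\<dots> = inner_p p (matvec p S b) (matvec p R (matvec p R Sb))" unfolding Sb_def ..
  also have "\<dots> = inner_p p b (matvec p S (matvec p R (matvec p R Sb)))" by (rule sym_swap[OF Ssym])
  also have "\<dots> = inner_p p b Sb" unfolding inner_p_def using LA1[OF inv, of Sb] by simp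
  also have "\<dots> \<le> (\<Sum>j<p. \<bar>b j\<bar> * \<bar>Sb j\<bar>)" unfolding inner_p_def
    by (rule order_trans[OF sum_abs[THEN order_trans[OF abs_ge_self]]]) (simp add: abs_mult)
  also have "\<dots> \<le> L2_set b {..<p} * L2_set Sb {..<p}" by (rule L2_set_mult_ineq)
  also have "\<dots> = norm2_p p b * norm2_p p Sb" unfolding norm2_p_def L2_set_def by simp
  also have "\<dots> \<le> norm2_p p b * (C * norm2_p p b)" unfolding Sb_def using Sop
    by (intro mult_left_mono) (auto simp: norm2_p_def sum_nonneg)
  finally show ?thesis by (simp add: power2_eq_square mult_ac)
qed

lemma comp_meas:
  fixes X :: "'a \<Rightarrow> nat \<Rightarrow> real"
  assumes X: "X \<in> measurable M (PiM {..<p} (\<lambda>_. borel))"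
  shows "(\<lambda>\<omega>. X \<omega> j) \<in> borel_measurable M"
proof (cases "j < p")
  case True
  then show ?thesis using X by (intro measurable_compose[OF X measurable_component_singleton]) auto
next
  case False
  have "\<forall>\<omega>\<in>space M. X \<omega> j = undefined"
  proof
    fix \<omega> assume "\<omega> \<in> space M"
    then have "X \<omega> \<in> space (PiM {..<p} (\<lambda>_. (borel :: real measure)))" using X by (intro measurable_space[OF X])
    then show "X \<omega> j = undefined" using False by (auto simp: space_PiM PiE_def extensional_def)
  qed
  then show ?thesis by (subst measurable_cong[where g = "\<lambda>_. undefined"]) auto
qed

lemma inner_meas:
  fixes X :: "'a \<Rightarrow> nat \<Rightarrow> real"
  assumes X: "X \<in> measurable M (PiM {..<p} (\<lambda>_. borel))"
  shows "(\<lambda>\<omega>. inner_p p (X \<omega>) b) \<in> borel_measurable M"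
    "(\<lambda>\<omega>. inner_p p u (matvec p R (X \<omega>))) \<in> borel_measurable M"
proof -
  have [measurable]: "(\<lambda>\<omega>. X \<omega> j) \<in> borel_measurable M" for j using comp_meas[OF X] .
  show "(\<lambda>\<omega>. inner_p p (X \<omega>) b) \<in> borel_measurable M" unfolding inner_p_def by measurable
  show "(\<lambda>\<omega>. inner_p p u (matvec p R (X \<omega>))) \<in> borel_measurable M"
    unfolding inner_p_def matvec_def by measurable
qed

lemma (in prob_space) sg_unit:
  fixes Z :: "'a \<Rightarrow> real"
  assumes Z: "Z \<in> borel_measurable M" and sg: "subgaussian M Z" and nb: "psi2_norm M Z \<le> Cg"
  shows "(\<integral>\<^sup>+\<omega>. ennreal (exp ((Z \<omega> / (\<bar>Cg\<bar> + 1))\<^sup>2)) \<partial>M) \<le> 2"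
proof -
  have ne: "{t. psi2_admissible M Z t} \<noteq> {}" using sg unfolding subgaussian_def by auto
  have "Inf {t. psi2_admissible M Z t} < \<bar>Cg\<bar> + 1" using nb unfolding psi2_norm_def by linarith
  from cInf_lessD[OF ne this] obtain t where t: "psi2_admissible M Z t" "t < \<bar>Cg\<bar> + 1" by auto
  have t0: "t > 0" and int: "integrable M (\<lambda>\<omega>. exp ((Z \<omega> / t)\<^sup>2))"
    and le2: "(\<integral>\<omega>. exp ((Z \<omega> / t)\<^sup>2) \<partial>M) \<le> 2" using t(1) unfolding psi2_admissible_def by auto
  have "(\<integral>\<^sup>+\<omega>. ennreal (exp ((Z \<omega> / (\<bar>Cg\<bar> + 1))\<^sup>2)) \<partial>M) \<le> (\<integral>\<^sup>+\<omega>. ennreal (exp ((Z \<omega> / t)\<^sup>2)) \<partial>M)"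
  proof (intro nn_integral_mono ennreal_leI)
    fix \<omega>
    have "\<bar>Z \<omega>\<bar> / (\<bar>Cg\<bar> + 1) \<le> \<bar>Z \<omega>\<bar> / t" using t0 t(2) by (intro divide_left_mono) auto
    then have "(\<bar>Z \<omega>\<bar> / (\<bar>Cg\<bar> + 1))\<^sup>2 \<le> (\<bar>Z \<omega>\<bar> / t)\<^sup>2" by (intro power_mono) auto
    then show "exp ((Z \<omega> / (\<bar>Cg\<bar> + 1))\<^sup>2) \<le> exp ((Z \<omega> / t)\<^sup>2)" by (simp add: power_divide power2_abs)
  qed
  also have "\<dots> = ennreal (\<integral>\<omega>. exp ((Z \<omega> / t)\<^sup>2) \<partial>M)"
    using int by (intro nn_integral_eq_integral) auto
  also have "\<dots> \<le> 2" using le2 by (simp add: ennreal_leI del: ennreal_numeral flip: ennreal_numeral)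
  finally show ?thesis .
qed

lemma norm2_zero_inner:
  assumes "norm2_p p v = 0"
  shows "inner_p p v z = 0"
proof -
  have "(\<Sum>j<p. (v j)\<^sup>2) = 0" using assms unfolding norm2_p_def by simp
  then have "\<forall>j<p. v j = 0" by (subst (asm) sum_nonneg_eq_0_iff) auto
  then show ?thesis unfolding inner_p_def by simp
qed

lemma norm2_nonneg: "norm2_p p v \<ge> 0" unfolding norm2_p_def by (simp add: sum_nonneg)

lemma (in prob_space) sg_scaled:
  fixes Xi :: "'a \<Rightarrow> nat \<Rightarrow> real"
  assumes X: "Xi \<in> measurable M (PiM {..<p} (\<lambda>_. borel))"
    and SG: "\<forall>u. norm2_p p u = 1 \<longrightarrow> subgaussian M (\<lambda>\<omega>. inner_p p u (matvec p R (Xi \<omega>)))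
                 \<and> psi2_norm M (\<lambda>\<omega>. inner_p p u (matvec p R (Xi \<omega>))) \<le> Cg"
    and v: "norm2_p p v \<le> s" and s: "s > 0"
  shows "(\<integral>\<^sup>+\<omega>. ennreal (exp ((inner_p p v (matvec p R (Xi \<omega>)) / (s * (\<bar>Cg\<bar> + 1)))\<^sup>2)) \<partial>M) \<le> 2"
proof (cases "norm2_p p v = 0")
  case True
  then show ?thesis by (simp add: norm2_zero_inner emeasure_space_1)
next
  case False
  define r where "r = norm2_p p v"
  have r0: "r > 0" using False norm2_nonneg[of p v] unfolding r_def by linarith
  define u where "u = (\<lambda>j. v j / r)"
  have un: "norm2_p p u = 1"
  proof -
    have "(\<Sum>j<p. (u j)\<^sup>2) = (\<Sum>j<p. (v j)\<^sup>2) / r\<^sup>2" unfolding u_def by (simp add: power_divide sum_divide_distrib)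
    also have "\<dots> = 1" using r0 unfolding r_def norm2_p_def by (simp add: sum_nonneg)
    finally show ?thesis unfolding norm2_p_def by simp
  qed
  have iv: "inner_p p v z = r * inner_p p u z" for z
    unfolding inner_p_def u_def using r0 by (simp add: sum_distrib_left)
  have Zm: "(\<lambda>\<omega>. inner_p p u (matvec p R (Xi \<omega>))) \<in> borel_measurable M" by (rule inner_meas(2)[OF X])
  have base: "(\<integral>\<^sup>+\<omega>. ennreal (exp ((inner_p p u (matvec p R (Xi \<omega>)) / (\<bar>Cg\<bar> + 1))\<^sup>2)) \<partial>M) \<le> 2"
    using SG un Zm by (intro sg_unit) auto
  have "(\<integral>\<^sup>+\<omega>. ennreal (exp ((inner_p p v (matvec p R (Xi \<omega>)) / (s * (\<bar>Cg\<bar> + 1)))\<^sup>2)) \<partial>M)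
     \<le> (\<integral>\<^sup>+\<omega>. ennreal (exp ((inner_p p u (matvec p R (Xi \<omega>)) / (\<bar>Cg\<bar> + 1))\<^sup>2)) \<partial>M)"
  proof (intro nn_integral_mono ennreal_leI)
    fix \<omega>
    define Z where "Z = inner_p p u (matvec p R (Xi \<omega>))"
    have "\<bar>r * Z\<bar> / (s * (\<bar>Cg\<bar> + 1)) \<le> \<bar>Z\<bar> / (\<bar>Cg\<bar> + 1)"
    proof -
      have "\<bar>r * Z\<bar> = r * \<bar>Z\<bar>" using r0 by (simp add: abs_mult)
      also have "\<dots> \<le> s * \<bar>Z\<bar>" using v r_def by (intro mult_right_mono) auto
      finally have "\<bar>r * Z\<bar> \<le> s * \<bar>Z\<bar>" .
      then have "\<bar>r * Z\<bar> / (s * (\<bar>Cg\<bar> + 1)) \<le> s * \<bar>Z\<bar> / (s * (\<bar>Cg\<bar> + 1))"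
        using s by (intro divide_right_mono) auto
      also have "\<dots> = \<bar>Z\<bar> / (\<bar>Cg\<bar> + 1)" using s by simp
      finally show ?thesis .
    qed
    then have "(\<bar>r * Z\<bar> / (s * (\<bar>Cg\<bar> + 1)))\<^sup>2 \<le> (\<bar>Z\<bar> / (\<bar>Cg\<bar> + 1))\<^sup>2"
      using s by (intro power_mono) auto
    then show "exp ((inner_p p v (matvec p R (Xi \<omega>)) / (s * (\<bar>Cg\<bar> + 1)))\<^sup>2) \<le> exp ((inner_p p u (matvec p R (Xi \<omega>)) / (\<bar>Cg\<bar> + 1))\<^sup>2)"
      unfolding iv Z_def[symmetric] by (simp add: power_divide power2_abs)
  qed
  also have "\<dots> \<le> 2" by (rule base)
  finally show ?thesis .
qed

lemma inner_pair_meas[measurable]: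
  "(\<lambda>z. inner_p p (fst z) b) \<in> borel_measurable (PiM {..<p} (\<lambda>_. borel) \<Otimes>\<^sub>M N)"
  unfolding inner_p_def by measurable

lemma inner_PiM_meas[measurable]:
  "(\<lambda>x. inner_p p x b) \<in> borel_measurable (PiM {..<p} (\<lambda>_. borel))"
  unfolding inner_p_def by measurable

lemma moe_meas:
  "(\<lambda>z. moe_density K p al be sg (fst z) (snd z)) \<in> borel_measurable (PiM {..<p} (\<lambda>_. borel) \<Otimes>\<^sub>M lborel)"
  unfolding moe_density_def gate_def comp_dens_def by measurable

lemma gate_props:
  assumes "K > 0"
  shows "(\<Sum>l<K. gate K p al x l) = 1" "\<And>l. gate K p al x l \<ge> 0" "\<And>l. l < K \<Longrightarrow> gate K p al x l \<le> 1"
proof -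
  define S where "S = (\<Sum>l<K. exp (inner_p p x (al l)))"
  have S: "S > 0" unfolding S_def using assms by (intro sum_pos) auto
  show "(\<Sum>l<K. gate K p al x l) = 1" unfolding gate_def S_def[symmetric]
    using S by (simp add: sum_divide_distrib[symmetric] S_def)
  show "\<And>l. gate K p al x l \<ge> 0" unfolding gate_def by (simp add: sum_nonneg)
  show "\<And>l. l < K \<Longrightarrow> gate K p al x l \<le> 1"
  proof -
    fix l assume "l < K"
    then have "exp (inner_p p x (al l)) \<le> S" unfolding S_def by (intro member_le_sum) auto
    then show "gate K p al x l \<le> 1" unfolding gate_def S_def[symmetric] using S by simp
  qed
qed

lemma comp_dens_normal:
  assumes "sg l > 0"
  shows "comp_dens p be sg x y l = normal_density (inner_p p x (be l)) (sg l) y"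
proof -
  have "sqrt (2 * pi * (sg l)\<^sup>2) = sqrt (2 * pi) * sg l" using assms by (simp add: real_sqrt_mult)
  then show ?thesis unfolding comp_dens_def normal_density_def by simp
qed

lemma normal_nn1: "\<sigma> > 0 \<Longrightarrow> (\<integral>\<^sup>+y. ennreal (normal_density \<mu> \<sigma> y) \<partial>lborel) = 1"
  by (subst nn_integral_eq_integral) (auto intro: integrable_normal_density simp: integral_normal_density)

lemma normal_nn6:
  assumes "\<sigma> > 0"
  shows "(\<integral>\<^sup>+y. ennreal (normal_density \<mu> \<sigma> y * \<bar>y - \<mu>\<bar>^6) \<partial>lborel) = ennreal (15 * \<sigma>^6)"
proof -
  have eq: "(\<lambda>y. normal_density \<mu> \<sigma> y * \<bar>y - \<mu>\<bar>^6) = (\<lambda>y. normal_density \<mu> \<sigma> y * (y - \<mu>)^(2 * 3))"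
    by (simp add: power_even_abs)
  have "(\<integral>\<^sup>+y. ennreal (normal_density \<mu> \<sigma> y * \<bar>y - \<mu>\<bar>^6) \<partial>lborel) = ennreal (\<integral>y. normal_density \<mu> \<sigma> y * (y - \<mu>)^(2 * 3) \<partial>lborel)"
    unfolding eq using assms by (subst nn_integral_eq_integral) (auto intro!: integrable_normal_moment)
  also have "(\<integral>y. normal_density \<mu> \<sigma> y * (y - \<mu>)^(2 * 3) \<partial>lborel) = 15 * \<sigma>^6"
    using assms by (subst integral_normal_moment_even) (simp_all add: fact_numeral field_simps power2_eq_square)
  finally show ?thesis .
qed

lemma nn_sum_lin:
  fixes f :: "'i \<Rightarrow> 'a \<Rightarrow> real"
  assumes I: "finite I" and fm: "\<forall>i\<in>I. f i \<in> borel_measurable M" and f0: "\<forall>i\<in>I. \<forall>x. f i x \<ge> 0"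
    and c0: "\<forall>i\<in>I. c i \<ge> 0"
  shows "(\<integral>\<^sup>+x. ennreal (\<Sum>i\<in>I. c i * f i x) \<partial>M) = (\<Sum>i\<in>I. ennreal (c i) * (\<integral>\<^sup>+x. ennreal (f i x) \<partial>M))"
proof -
  have "(\<integral>\<^sup>+x. ennreal (\<Sum>i\<in>I. c i * f i x) \<partial>M) = (\<integral>\<^sup>+x. (\<Sum>i\<in>I. ennreal (c i) * ennreal (f i x)) \<partial>M)"
    using f0 c0 by (intro nn_integral_cong) (simp add: sum_ennreal[symmetric] ennreal_mult del: sum_ennreal)
  also have "\<dots> = (\<Sum>i\<in>I. (\<integral>\<^sup>+x. ennreal (c i) * ennreal (f i x) \<partial>M))"
    using fm by (intro nn_integral_sum) auto
  also have "\<dots> = (\<Sum>i\<in>I. ennreal (c i) * (\<integral>\<^sup>+x. ennreal (f i x) \<partial>M))"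
    using fm by (intro sum.cong refl nn_integral_cmult) auto
  finally show ?thesis .
qed

lemma normal_nn6':
  assumes "\<sigma> > 0"
  shows "(\<integral>\<^sup>+y. ennreal (normal_density \<mu> \<sigma> y * (y - \<mu>)^6) \<partial>lborel) = ennreal (15 * \<sigma>^6)"
  using normal_nn6[OF assms, of \<mu>] by simp

lemma pow6_tri:
  fixes a b :: real
  shows "\<bar>a + b\<bar>^6 \<le> 64 * (\<bar>a\<bar>^6 + \<bar>b\<bar>^6)"
proof -
  have "\<bar>a + b\<bar> \<le> 2 * max \<bar>a\<bar> \<bar>b\<bar>" by (simp add: abs_triangle_ineq[THEN order_trans] max_def)
  then have "\<bar>a + b\<bar>^6 \<le> (2 * max \<bar>a\<bar> \<bar>b\<bar>)^6" by (intro power_mono) auto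
  also have "\<dots> = 64 * (max \<bar>a\<bar> \<bar>b\<bar>)^6" by (simp add: power_mult_distrib)
  also have "\<dots> \<le> 64 * (\<bar>a\<bar>^6 + \<bar>b\<bar>^6)" by (simp add: max_def)
  finally show ?thesis .
qed

lemma moe_y_moment:
  assumes K: "K > 0" and k: "k < K" and sg: "\<forall>l<K. sg l > 0"
  shows "(\<integral>\<^sup>+y. ennreal (moe_density K p al be sg x y * \<bar>y - inner_p p x (be k)\<bar>^6) \<partial>lborel)
     \<le> ennreal (64 * (\<Sum>l<K. 15 * (sg l)^6 + \<bar>inner_p p x (be l) - inner_p p x (be k)\<bar>^6))"
proof -
  define \<mu> where "\<mu> = (\<lambda>l. inner_p p x (be l))"
  define g where "g = (\<lambda>l. gate K p al x l)"
  have g0: "\<forall>l. g l \<ge> 0" and g1: "\<forall>l<K. g l \<le> 1" using gate_props[OF K] unfolding g_def by auto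
  have pw: "moe_density K p al be sg x y * \<bar>y - \<mu> k\<bar>^6 \<le>
      (\<Sum>l<K. (64 * g l) * (normal_density (\<mu> l) (sg l) y * \<bar>y - \<mu> l\<bar>^6))
      + (\<Sum>l<K. (64 * g l * \<bar>\<mu> l - \<mu> k\<bar>^6) * normal_density (\<mu> l) (sg l) y)" for y
  proof -
    have "moe_density K p al be sg x y * \<bar>y - \<mu> k\<bar>^6 = (\<Sum>l<K. g l * normal_density (\<mu> l) (sg l) y * \<bar>y - \<mu> k\<bar>^6)"
      unfolding moe_density_def g_def \<mu>_def using sg by (simp add: sum_distrib_right comp_dens_normal)
    also have "\<dots> \<le> (\<Sum>l<K. g l * normal_density (\<mu> l) (sg l) y * (64 * (\<bar>y - \<mu> l\<bar>^6 + \<bar>\<mu> l - \<mu> k\<bar>^6)))"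
    proof (intro sum_mono mult_left_mono)
      fix l
      show "\<bar>y - \<mu> k\<bar>^6 \<le> 64 * (\<bar>y - \<mu> l\<bar>^6 + \<bar>\<mu> l - \<mu> k\<bar>^6)" using pow6_tri[of "y - \<mu> l" "\<mu> l - \<mu> k"] by simp
      show "0 \<le> g l * normal_density (\<mu> l) (sg l) y" using g0 by simp
    qed
    also have "\<dots> = (\<Sum>l<K. (64 * g l) * (normal_density (\<mu> l) (sg l) y * \<bar>y - \<mu> l\<bar>^6))
      + (\<Sum>l<K. (64 * g l * \<bar>\<mu> l - \<mu> k\<bar>^6) * normal_density (\<mu> l) (sg l) y)"
      by (simp add: sum.distrib[symmetric] algebra_simps)
    finally show ?thesis .
  qed
  have "(\<integral>\<^sup>+y. ennreal (moe_density K p al be sg x y * \<bar>y - \<mu> k\<bar>^6) \<partial>lborel)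
     \<le> (\<integral>\<^sup>+y. ennreal (\<Sum>l<K. (64 * g l) * (normal_density (\<mu> l) (sg l) y * \<bar>y - \<mu> l\<bar>^6))
          + ennreal (\<Sum>l<K. (64 * g l * \<bar>\<mu> l - \<mu> k\<bar>^6) * normal_density (\<mu> l) (sg l) y) \<partial>lborel)"
    using pw g0 by (intro nn_integral_mono) (simp add: ennreal_plus[symmetric] sum_nonneg ennreal_leI del: ennreal_plus)
  also have "\<dots> = (\<integral>\<^sup>+y. ennreal (\<Sum>l<K. (64 * g l) * (normal_density (\<mu> l) (sg l) y * \<bar>y - \<mu> l\<bar>^6)) \<partial>lborel)
       + (\<integral>\<^sup>+y. ennreal (\<Sum>l<K. (64 * g l * \<bar>\<mu> l - \<mu> k\<bar>^6) * normal_density (\<mu> l) (sg l) y) \<partial>lborel)"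
    by (intro nn_integral_add) auto
  also have "\<dots> = (\<Sum>l<K. ennreal (64 * g l) * (\<integral>\<^sup>+y. ennreal (normal_density (\<mu> l) (sg l) y * \<bar>y - \<mu> l\<bar>^6) \<partial>lborel))
       + (\<Sum>l<K. ennreal (64 * g l * \<bar>\<mu> l - \<mu> k\<bar>^6) * (\<integral>\<^sup>+y. ennreal (normal_density (\<mu> l) (sg l) y) \<partial>lborel))"
  proof -
    have e1: "(\<integral>\<^sup>+y. ennreal (\<Sum>l<K. (64 * g l) * (normal_density (\<mu> l) (sg l) y * \<bar>y - \<mu> l\<bar>^6)) \<partial>lborel)
      = (\<Sum>l<K. ennreal (64 * g l) * (\<integral>\<^sup>+y. ennreal (normal_density (\<mu> l) (sg l) y * \<bar>y - \<mu> l\<bar>^6) \<partial>lborel))"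
      by (rule nn_sum_lin) (use g0 in auto)
    have e2: "(\<integral>\<^sup>+y. ennreal (\<Sum>l<K. (64 * g l * \<bar>\<mu> l - \<mu> k\<bar>^6) * normal_density (\<mu> l) (sg l) y) \<partial>lborel)
      = (\<Sum>l<K. ennreal (64 * g l * \<bar>\<mu> l - \<mu> k\<bar>^6) * (\<integral>\<^sup>+y. ennreal (normal_density (\<mu> l) (sg l) y) \<partial>lborel))"
      by (rule nn_sum_lin) (use g0 in auto)
    show ?thesis by (simp only: e1 e2)
  qed
  also have "\<dots> = (\<Sum>l<K. ennreal (64 * g l) * ennreal (15 * (sg l)^6))
       + (\<Sum>l<K. ennreal (64 * g l * \<bar>\<mu> l - \<mu> k\<bar>^6) * 1)"
    using sg by (simp add: normal_nn6' normal_nn1)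
  also have "\<dots> = ennreal (\<Sum>l<K. 64 * g l * (15 * (sg l)^6 + \<bar>\<mu> l - \<mu> k\<bar>^6))"
    using g0 sg by (simp add: ennreal_mult[symmetric] ennreal_plus[symmetric] sum_ennreal sum_nonneg
        sum.distrib[symmetric] algebra_simps del: ennreal_plus)
  also have "\<dots> \<le> ennreal (64 * (\<Sum>l<K. 15 * (sg l)^6 + \<bar>\<mu> l - \<mu> k\<bar>^6))"
  proof (intro ennreal_leI)
    have "(\<Sum>l<K. 64 * g l * (15 * (sg l)^6 + \<bar>\<mu> l - \<mu> k\<bar>^6)) \<le> (\<Sum>l<K. 64 * 1 * (15 * (sg l)^6 + \<bar>\<mu> l - \<mu> k\<bar>^6))"
      using g0 g1 sg by (intro sum_mono mult_right_mono) auto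
    then show "(\<Sum>l<K. 64 * g l * (15 * (sg l)^6 + \<bar>\<mu> l - \<mu> k\<bar>^6)) \<le> 64 * (\<Sum>l<K. 15 * (sg l)^6 + \<bar>\<mu> l - \<mu> k\<bar>^6)"
      by (simp add: sum_distrib_left)
  qed
  finally show ?thesis unfolding \<mu>_def .
qed

definition kern :: "nat \<Rightarrow> nat \<Rightarrow> (nat \<Rightarrow> nat \<Rightarrow> real) \<Rightarrow> (nat \<Rightarrow> nat \<Rightarrow> real) \<Rightarrow> (nat \<Rightarrow> real)
    \<Rightarrow> (nat \<Rightarrow> real) \<Rightarrow> ((nat \<Rightarrow> real) \<times> real) measure" where
  "kern K p al be sg = (\<lambda>x. distr (density lborel (\<lambda>y. ennreal (moe_density K p al be sg x y)))
                               (PiM {..<p} (\<lambda>_. borel) \<Otimes>\<^sub>M borel) (\<lambda>y. (x, y)))"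

lemma moe_y_meas[measurable]: "(\<lambda>y. moe_density K p al be sg x y) \<in> borel_measurable lborel"
  unfolding moe_density_def gate_def comp_dens_def by measurable

lemma moe_nonneg:
  assumes "\<forall>l<K. sg l > 0"
  shows "moe_density K p al be sg x y \<ge> 0"
  unfolding moe_density_def gate_def comp_dens_def using assms
  by (intro sum_nonneg mult_nonneg_nonneg) (auto simp: sum_nonneg)

lemma moe_total:
  assumes K: "K > 0" and sg: "\<forall>l<K. sg l > 0"
  shows "(\<integral>\<^sup>+y. ennreal (moe_density K p al be sg x y) \<partial>lborel) = 1"
proof -
  have "(\<integral>\<^sup>+y. ennreal (moe_density K p al be sg x y) \<partial>lborel)
      = (\<integral>\<^sup>+y. ennreal (\<Sum>l<K. gate K p al x l * normal_density (inner_p p x (be l)) (sg l) y) \<partial>lborel)"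
    unfolding moe_density_def using sg by (intro nn_integral_cong) (simp add: comp_dens_normal)
  also have "\<dots> = (\<Sum>l<K. ennreal (gate K p al x l) * (\<integral>\<^sup>+y. ennreal (normal_density (inner_p p x (be l)) (sg l) y) \<partial>lborel))"
    by (rule nn_sum_lin) (use gate_props[OF K] in auto)
  also have "\<dots> = (\<Sum>l<K. ennreal (gate K p al x l))" using sg by (simp add: normal_nn1)
  also have "\<dots> = 1" using gate_props[OF K] by (simp add: sum_ennreal)
  finally show ?thesis .
qed

lemma pair_x_meas:
  assumes x: "x \<in> space (PiM {..<p} (\<lambda>_. (borel :: real measure)))"
  shows "(\<lambda>y. (x, y)) \<in> measurable (density lborel f) (PiM {..<p} (\<lambda>_. borel) \<Otimes>\<^sub>M borel)"
proof -
  have "(\<lambda>y. (x, y)) \<in> measurable borel (PiM {..<p} (\<lambda>_. borel) \<Otimes>\<^sub>M borel)"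
    using x by (intro measurable_Pair) auto
  then show ?thesis by (simp cong: measurable_cong_sets)
qed

lemma kern_prob:
  assumes K: "K > 0" and sg: "\<forall>l<K. sg l > 0" and x: "x \<in> space (PiM {..<p} (\<lambda>_. (borel :: real measure)))"
  shows "prob_space (kern K p al be sg x)"
proof -
  have "prob_space (density lborel (\<lambda>y. ennreal (moe_density K p al be sg x y)))"
  proof (rule prob_spaceI)
    have "emeasure (density lborel (\<lambda>y. ennreal (moe_density K p al be sg x y))) (space lborel)
      = (\<integral>\<^sup>+y. ennreal (moe_density K p al be sg x y) * indicator (space lborel) y \<partial>lborel)"
      by (rule emeasure_density) auto
    also have "\<dots> = 1" using moe_total[OF K sg] by simp
    finally show "emeasure (density lborel (\<lambda>y. ennreal (moe_density K p al be sg x y)))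
        (space (density lborel (\<lambda>y. ennreal (moe_density K p al be sg x y)))) = 1" by simp
  qed
  then show ?thesis unfolding kern_def using pair_x_meas[OF x] by (rule prob_space.prob_space_distr)
qed

lemma kern_meas:
  assumes K: "K > 0" and sg: "\<forall>l<K. sg l > 0"
  shows "kern K p al be sg \<in> measurable (PiM {..<p} (\<lambda>_. borel)) (subprob_algebra (PiM {..<p} (\<lambda>_. borel) \<Otimes>\<^sub>M borel))"
proof (rule measurable_subprob_algebra)
  fix x assume x: "x \<in> space (PiM {..<p} (\<lambda>_. (borel :: real measure)))"
  show "subprob_space (kern K p al be sg x)" using kern_prob[OF K sg x] by (rule prob_space_imp_subprob_space)
  show "sets (kern K p al be sg x) = sets (PiM {..<p} (\<lambda>_. borel) \<Otimes>\<^sub>M borel)" unfolding kern_def by simp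
next
  fix A :: "((nat \<Rightarrow> real) \<times> real) set" assume A: "A \<in> sets (PiM {..<p} (\<lambda>_. (borel :: real measure)) \<Otimes>\<^sub>M borel)"
  have A': "A \<in> sets (PiM {..<p} (\<lambda>_. (borel :: real measure)) \<Otimes>\<^sub>M lborel)" using A by simp
  have eq: "emeasure (kern K p al be sg x) A = (\<integral>\<^sup>+y. ennreal (moe_density K p al be sg x y) * indicator A (x, y) \<partial>lborel)"
    if x: "x \<in> space (PiM {..<p} (\<lambda>_. (borel :: real measure)))" for x
  proof -
    have "emeasure (kern K p al be sg x) A = emeasure (density lborel (\<lambda>y. ennreal (moe_density K p al be sg x y))) ((\<lambda>y. (x, y)) -` A \<inter> space (density lborel (\<lambda>y. ennreal (moe_density K p al be sg x y))))"
      unfolding kern_def using pair_x_meas[OF x] A by (rule emeasure_distr)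
    also have "\<dots> = (\<integral>\<^sup>+y. ennreal (moe_density K p al be sg x y) * indicator ((\<lambda>y. (x, y)) -` A \<inter> space lborel) y \<partial>lborel)"
    proof -
      have "(\<lambda>y. (x, y)) \<in> measurable lborel (PiM {..<p} (\<lambda>_. borel) \<Otimes>\<^sub>M borel)"
        using pair_x_meas[OF x, of "\<lambda>_. 1"] by (simp cong: measurable_cong_sets)
      then have S: "(\<lambda>y. (x, y)) -` A \<inter> space lborel \<in> sets lborel" using A by (rule measurable_sets)
      show ?thesis by (subst emeasure_density) (use S in auto)
    qed
    also have "\<dots> = (\<integral>\<^sup>+y. ennreal (moe_density K p al be sg x y) * indicator A (x, y) \<partial>lborel)"
      by (intro nn_integral_cong) (auto simp: indicator_def)
    finally show ?thesis .
  qed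
  have "(\<lambda>x. \<integral>\<^sup>+y. ennreal (moe_density K p al be sg x y) * indicator A (x, y) \<partial>lborel) \<in> borel_measurable (PiM {..<p} (\<lambda>_. borel))"
  proof (rule lborel.borel_measurable_nn_integral)
    have [measurable]: "A \<in> sets (PiM {..<p} (\<lambda>_. (borel :: real measure)) \<Otimes>\<^sub>M lborel)" by (rule A')
    have m1: "(\<lambda>z. moe_density K p al be sg (fst z) (snd z)) \<in> borel_measurable (PiM {..<p} (\<lambda>_. borel) \<Otimes>\<^sub>M lborel)"
      by (rule moe_meas)
    show "(\<lambda>(x, y). ennreal (moe_density K p al be sg x y) * indicator A (x, y)) \<in> borel_measurable (PiM {..<p} (\<lambda>_. borel) \<Otimes>\<^sub>M lborel)"
      using m1 by (simp add: case_prod_beta') measurable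
  qed
  then show "(\<lambda>x. emeasure (kern K p al be sg x) A) \<in> borel_measurable (PiM {..<p} (\<lambda>_. borel))"
    by (subst measurable_cong[OF eq]) auto
qed

lemma (in prob_space) y_moment:
  fixes Xi :: "'a \<Rightarrow> nat \<Rightarrow> real" and Yi :: "'a \<Rightarrow> real"
  assumes Xm: "Xi \<in> measurable M (PiM {..<p} (\<lambda>_. borel))" and Ym: "Yi \<in> borel_measurable M"
    and model: "distr M (PiM {..<p} (\<lambda>_. borel) \<Otimes>\<^sub>M borel) (\<lambda>\<omega>. (Xi \<omega>, Yi \<omega>)) =
                  bind (distr M (PiM {..<p} (\<lambda>_. borel)) Xi)
                    (\<lambda>x. distr (density lborel (\<lambda>y. ennreal (moe_density K p al be sg x y)))
                               (PiM {..<p} (\<lambda>_. borel) \<Otimes>\<^sub>M borel) (\<lambda>y. (x, y)))"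
    and K: "K > 0" and k: "k < K" and sg: "\<forall>l<K. sg l > 0"
  shows "(\<integral>\<^sup>+\<omega>. ennreal (\<bar>Yi \<omega> - inner_p p (Xi \<omega>) (be k)\<bar>^6) \<partial>M)
     \<le> (\<integral>\<^sup>+\<omega>. ennreal (64 * (\<Sum>l<K. 15 * (sg l)^6 + \<bar>inner_p p (Xi \<omega>) (be l) - inner_p p (Xi \<omega>) (be k)\<bar>^6)) \<partial>M)"
proof -
  let ?B = "PiM {..<p} (\<lambda>_. (borel :: real measure)) \<Otimes>\<^sub>M (borel :: real measure)"
  define F where "F = (\<lambda>z::(nat \<Rightarrow> real) \<times> real. ennreal (\<bar>snd z - inner_p p (fst z) (be k)\<bar>^6))"
  define G where "G = (\<lambda>x. ennreal (64 * (\<Sum>l<K. 15 * (sg l)^6 + \<bar>inner_p p x (be l) - inner_p p x (be k)\<bar>^6)))"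
  have Fm: "F \<in> borel_measurable ?B" unfolding F_def by measurable
  have Gm: "G \<in> borel_measurable (PiM {..<p} (\<lambda>_. borel))" unfolding G_def by measurable
  have XYm: "(\<lambda>\<omega>. (Xi \<omega>, Yi \<omega>)) \<in> measurable M ?B" using Xm Ym by (intro measurable_Pair)
  have kdef: "(\<lambda>x. distr (density lborel (\<lambda>y. ennreal (moe_density K p al be sg x y)))
                               (PiM {..<p} (\<lambda>_. borel) \<Otimes>\<^sub>M borel) (\<lambda>y. (x, y))) = kern K p al be sg"
    unfolding kern_def ..
  have "(\<integral>\<^sup>+\<omega>. ennreal (\<bar>Yi \<omega> - inner_p p (Xi \<omega>) (be k)\<bar>^6) \<partial>M) = (\<integral>\<^sup>+\<omega>. F (Xi \<omega>, Yi \<omega>) \<partial>M)"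
    unfolding F_def by simp
  also have "\<dots> = (\<integral>\<^sup>+z. F z \<partial>distr M ?B (\<lambda>\<omega>. (Xi \<omega>, Yi \<omega>)))"
    using XYm Fm by (subst nn_integral_distr) auto
  also have "\<dots> = (\<integral>\<^sup>+z. F z \<partial>bind (distr M (PiM {..<p} (\<lambda>_. borel)) Xi) (kern K p al be sg))"
    unfolding model kdef ..
  also have "\<dots> = (\<integral>\<^sup>+x. (\<integral>\<^sup>+z. F z \<partial>kern K p al be sg x) \<partial>distr M (PiM {..<p} (\<lambda>_. borel)) Xi)"
    using Fm kern_meas[OF K sg] by (intro nn_integral_bind) (auto simp: measurable_distr_eq1)
  also have "\<dots> \<le> (\<integral>\<^sup>+x. G x \<partial>distr M (PiM {..<p} (\<lambda>_. borel)) Xi)"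
  proof (intro nn_integral_mono)
    fix x assume "x \<in> space (distr M (PiM {..<p} (\<lambda>_. borel)) Xi)"
    then have x: "x \<in> space (PiM {..<p} (\<lambda>_. (borel :: real measure)))" by simp
    have "(\<integral>\<^sup>+z. F z \<partial>kern K p al be sg x) = (\<integral>\<^sup>+y. F (x, y) \<partial>density lborel (\<lambda>y. ennreal (moe_density K p al be sg x y)))"
      unfolding kern_def using pair_x_meas[OF x] Fm by (subst nn_integral_distr) auto
    also have "\<dots> = (\<integral>\<^sup>+y. ennreal (moe_density K p al be sg x y) * F (x, y) \<partial>lborel)"
    proof (rule nn_integral_density)
      have "(\<lambda>y. (x, y)) \<in> measurable lborel ?B"
        using pair_x_meas[OF x, of "\<lambda>_. 1"] by (simp cong: measurable_cong_sets)
      from measurable_compose[OF this Fm] show "(\<lambda>y. F (x, y)) \<in> borel_measurable lborel" .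
    qed measurable
    also have "\<dots> = (\<integral>\<^sup>+y. ennreal (moe_density K p al be sg x y * \<bar>y - inner_p p x (be k)\<bar>^6) \<partial>lborel)"
      unfolding F_def using moe_nonneg[OF sg] by (intro nn_integral_cong) (simp add: ennreal_mult)
    also have "\<dots> \<le> G x" unfolding G_def by (rule moe_y_moment[OF K k sg])
    finally show "(\<integral>\<^sup>+z. F z \<partial>kern K p al be sg x) \<le> G x" .
  qed
  also have "\<dots> = (\<integral>\<^sup>+\<omega>. G (Xi \<omega>) \<partial>M)" using Xm Gm by (intro nn_integral_distr) auto
  finally show ?thesis unfolding G_def .
qed

lemma meas_Max_ins0:
  fixes f :: "nat \<Rightarrow> 'a \<Rightarrow> real"
  assumes "\<forall>j. f j \<in> borel_measurable M"
  shows "(\<lambda>\<omega>. Max (insert 0 ((\<lambda>j. f j \<omega>) ` {..<p}))) \<in> borel_measurable M"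
proof (cases "p = 0")
  case True then show ?thesis by simp
next
  case False
  have eq: "Max (insert 0 ((\<lambda>j. f j \<omega>) ` {..<p})) = max 0 (Max ((\<lambda>j. f j \<omega>) ` {..<p}))" for \<omega>
    using False by (subst Max_insert) auto
  have "(\<lambda>\<omega>. Max ((\<lambda>j. f j \<omega>) ` {..<p})) \<in> borel_measurable M"
    using assms by (intro borel_measurable_Max) auto
  then show ?thesis unfolding eq by measurable
qed

lemma (in prob_space) nn_lin_bound:
  fixes f :: "nat \<Rightarrow> 'a \<Rightarrow> real" and h :: "'a \<Rightarrow> real"
  assumes I: "finite I" and fm: "\<forall>i\<in>I. f i \<in> borel_measurable M" and f0: "\<forall>i\<in>I. \<forall>x. f i x \<ge> 0"
    and c0: "\<forall>i\<in>I. c i \<ge> 0" and cc: "cc \<ge> 0" and r0: "\<forall>i\<in>I. r i \<ge> 0"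
    and fr: "\<forall>i\<in>I. (\<integral>\<^sup>+x. ennreal (f i x) \<partial>M) \<le> ennreal (r i)"
    and hb: "\<forall>x\<in>space M. h x \<le> cc + (\<Sum>i\<in>I. c i * f i x)"
  shows "(\<integral>\<^sup>+x. ennreal (h x) \<partial>M) \<le> ennreal (cc + (\<Sum>i\<in>I. c i * r i))"
proof -
  have "(\<integral>\<^sup>+x. ennreal (h x) \<partial>M) \<le> (\<integral>\<^sup>+x. ennreal cc + ennreal (\<Sum>i\<in>I. c i * f i x) \<partial>M)"
  proof (intro nn_integral_mono)
    fix x assume x: "x \<in> space M"
    have s0: "0 \<le> (\<Sum>i\<in>I. c i * f i x)" using f0 c0 by (intro sum_nonneg) auto
    have "ennreal (h x) \<le> ennreal (cc + (\<Sum>i\<in>I. c i * f i x))" using hb x by (intro ennreal_leI) auto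
    also have "\<dots> = ennreal cc + ennreal (\<Sum>i\<in>I. c i * f i x)" using cc s0 by (rule ennreal_plus)
    finally show "ennreal (h x) \<le> ennreal cc + ennreal (\<Sum>i\<in>I. c i * f i x)" .
  qed
  also have "\<dots> = (\<integral>\<^sup>+x. ennreal cc \<partial>M) + (\<integral>\<^sup>+x. ennreal (\<Sum>i\<in>I. c i * f i x) \<partial>M)"
  proof (rule nn_integral_add)
    show "(\<lambda>x. ennreal (\<Sum>i\<in>I. c i * f i x)) \<in> borel_measurable M"
      using fm by (intro measurable_compose[OF _ measurable_ennreal] borel_measurable_sum borel_measurable_times) auto
  qed auto
  also have "\<dots> = ennreal cc + (\<Sum>i\<in>I. ennreal (c i) * (\<integral>\<^sup>+x. ennreal (f i x) \<partial>M))"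
    using nn_sum_lin[OF I fm f0 c0] by (simp add: emeasure_space_1)
  also have "\<dots> \<le> ennreal cc + (\<Sum>i\<in>I. ennreal (c i) * ennreal (r i))"
    using fr by (intro add_left_mono sum_mono mult_left_mono) auto
  also have "\<dots> = ennreal (cc + (\<Sum>i\<in>I. c i * r i))"
  proof -
    have "(\<Sum>i\<in>I. ennreal (c i) * ennreal (r i)) = (\<Sum>i\<in>I. ennreal (c i * r i))"
      using c0 r0 by (intro sum.cong refl) (simp add: ennreal_mult)
    also have "\<dots> = ennreal (\<Sum>i\<in>I. c i * r i)" using c0 r0 by (intro sum_ennreal) auto
    finally show ?thesis using cc c0 r0 by (simp add: ennreal_plus sum_nonneg)
  qed
  finally show ?thesis .
qed

lemma amgm: "(x::real) * y \<le> (lam * x\<^sup>2 + y\<^sup>2 / lam) / 2" if "lam > 0" for x y lam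
proof -
  have "0 \<le> (lam * x - y)\<^sup>2 / lam" using that by simp
  also have "(lam * x - y)\<^sup>2 / lam = lam * x\<^sup>2 - 2 * x * y + y\<^sup>2 / lam"
    using that by (simp add: power2_eq_square diff_divide_distrib add_divide_distrib algebra_simps)
  finally show ?thesis by simp
qed

lemma one_plus_pow:
  fixes m :: real assumes "m \<ge> 0"
  shows "(1 + m)^q \<le> 2^q * (1 + m^q)"
proof -
  have "(1 + m)^q \<le> (2 * max 1 m)^q" using assms by (intro power_mono) auto
  also have "\<dots> = 2^q * (max 1 m)^q" by (simp add: power_mult_distrib)
  also have "(max 1 m)^q \<le> 1 + m^q" using assms by (simp add: max_def)
  finally show ?thesis by simp
qed

lemma a_pow6:
  fixes a e G :: real and g :: "nat \<Rightarrow> real"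
  assumes a: "a \<le> \<bar>e\<bar> + G" "0 \<le> a" and G: "0 \<le> G" "G^6 \<le> (\<Sum>l<K. \<bar>g l\<bar>^6)"
  shows "(1 + a)^6 \<le> 4096 * (1 + \<bar>e\<bar>^6 + (\<Sum>l<K. \<bar>g l\<bar>^6))"
proof -
  have "(1 + a)^6 \<le> \<bar>1 + (\<bar>e\<bar> + G)\<bar>^6" using a G by (intro power_mono) auto
  also have "\<dots> \<le> 64 * (\<bar>1\<bar>^6 + \<bar>\<bar>e\<bar> + G\<bar>^6)" by (rule pow6_tri)
  also have "\<bar>\<bar>e\<bar> + G\<bar>^6 \<le> 64 * (\<bar>\<bar>e\<bar>\<bar>^6 + \<bar>G\<bar>^6)" by (rule pow6_tri)
  finally have "(1 + a)^6 \<le> 64 * (1 + 64 * (\<bar>e\<bar>^6 + G^6))" using G by simp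
  moreover have "64 * (1 + 64 * (\<bar>e\<bar>^6 + G^6)) \<le> 4096 * (1 + \<bar>e\<bar>^6 + (\<Sum>l<K. \<bar>g l\<bar>^6))"
    using G(2) by (simp add: algebra_simps)
  ultimately show ?thesis by linarith
qed

lemma Max_ins0_pow_le_sum:
  fixes g :: "nat \<Rightarrow> real" assumes q: "q > 0"
  shows "(Max (insert 0 ((\<lambda>l. \<bar>g l\<bar>) ` {..<K})))^q \<le> (\<Sum>l<K. \<bar>g l\<bar>^q)"
proof -
  from Max_ins0_in[of "\<lambda>l. \<bar>g l\<bar>" K] show ?thesis
  proof
    assume "Max (insert 0 ((\<lambda>l. \<bar>g l\<bar>) ` {..<K})) = 0"
    then show ?thesis using q by (simp add: power_0_left sum_nonneg)
  next
    assume "\<exists>j<K. Max (insert 0 ((\<lambda>l. \<bar>g l\<bar>) ` {..<K})) = \<bar>g j\<bar>"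
    then obtain j where j: "j < K" "Max (insert 0 ((\<lambda>l. \<bar>g l\<bar>) ` {..<K})) = \<bar>g j\<bar>" by auto
    show ?thesis unfolding j(2) using j(1) by (intro member_le_sum) auto
  qed
qed

lemma Max_ins0_le:
  fixes f :: "nat \<Rightarrow> real"
  assumes "\<forall>l<K. f l \<le> c" "0 \<le> c"
  shows "Max (insert 0 (f ` {..<K})) \<le> c"
  using assms by (intro Max.boundedI) auto

definition Ae_c :: "nat \<Rightarrow> (nat \<Rightarrow> real) \<Rightarrow> real \<Rightarrow> real" where
  "Ae_c K sg T = 64 * (15 * (\<Sum>l<K. (sg l)^6)) + real K * (64 * (54 * T^6))"
definition A6_c :: "nat \<Rightarrow> (nat \<Rightarrow> real) \<Rightarrow> real \<Rightarrow> real" where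
  "A6_c K sg T = 4096 * (1 + Ae_c K sg T + real K * (54 * T^6))"
definition C1_c :: "nat \<Rightarrow> (nat \<Rightarrow> real) \<Rightarrow> real \<Rightarrow> real" where
  "C1_c K sg T = A6_c K sg T + 16 + 320 * T^4"
definition C2_c :: "nat \<Rightarrow> (nat \<Rightarrow> real) \<Rightarrow> real \<Rightarrow> real" where
  "C2_c K sg T = A6_c K sg T + 64 + 14336 * T^6"

lemma (in prob_space) sample_moments:
  fixes Xi :: "'a \<Rightarrow> nat \<Rightarrow> real" and Yi :: "'a \<Rightarrow> real"
  assumes Xm: "Xi \<in> measurable M (PiM {..<p} (\<lambda>_. borel))" and Ym: "Yi \<in> borel_measurable M"
    and model: "distr M (PiM {..<p} (\<lambda>_. borel) \<Otimes>\<^sub>M borel) (\<lambda>\<omega>. (Xi \<omega>, Yi \<omega>)) =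
                  bind (distr M (PiM {..<p} (\<lambda>_. borel)) Xi)
                    (\<lambda>x. distr (density lborel (\<lambda>y. ennreal (moe_density K p al be sg x y)))
                               (PiM {..<p} (\<lambda>_. borel) \<Otimes>\<^sub>M borel) (\<lambda>y. (x, y)))"
    and K: "K > 0" and k: "k < K" and sg: "\<forall>l<K. sg l > 0"
    and T: "T > 0" and Bb: "Bb \<ge> 1"
    and SGb: "\<forall>b. norm2_p p b \<le> Bb \<longrightarrow> (\<integral>\<^sup>+\<omega>. ennreal (exp ((inner_p p (Xi \<omega>) b / T)\<^sup>2)) \<partial>M) \<le> 2"
    and beb: "\<forall>l<K. norm2_p p (\<lambda>j. be l j - be k j) \<le> Bb"
  shows "(\<integral>\<^sup>+\<omega>. ennreal ((1 + Max (insert 0 ((\<lambda>l. \<bar>Yi \<omega> - inner_p p (Xi \<omega>) (be l)\<bar>) ` {..<K})))^3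
                       * (1 + Max (insert 0 ((\<lambda>j. \<bar>Xi \<omega> j\<bar>) ` {..<p})))^2) \<partial>M)
          \<le> ennreal (C1_c K sg T * (ln (2 * (real p + 1)) + 1))"
    and "(\<integral>\<^sup>+\<omega>. ennreal ((1 + Max (insert 0 ((\<lambda>l. \<bar>Yi \<omega> - inner_p p (Xi \<omega>) (be l)\<bar>) ` {..<K})))^3
                       * (1 + Max (insert 0 ((\<lambda>j. \<bar>Xi \<omega> j\<bar>) ` {..<p})))^3) \<partial>M)
          \<le> ennreal (C2_c K sg T * (ln (2 * (real p + 1)) + 1)^2)"
proof -
  define L where "L = ln (2 * (real p + 1))"
  define L' where "L' = L + 1"
  have L0: "L \<ge> 0" unfolding L_def by simp
  have L'1: "L' \<ge> 1" unfolding L'_def using L0 by simp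
  define a where "a = (\<lambda>\<omega>. Max (insert 0 ((\<lambda>l. \<bar>Yi \<omega> - inner_p p (Xi \<omega>) (be l)\<bar>) ` {..<K})))"
  define m where "m = (\<lambda>\<omega>. Max (insert 0 ((\<lambda>j. \<bar>Xi \<omega> j\<bar>) ` {..<p})))"
  define e where "e = (\<lambda>\<omega>. Yi \<omega> - inner_p p (Xi \<omega>) (be k))"
  define g where "g = (\<lambda>l \<omega>. inner_p p (Xi \<omega>) (be l) - inner_p p (Xi \<omega>) (be k))"
  have [measurable]: "(\<lambda>\<omega>. Xi \<omega> j) \<in> borel_measurable M" for j using comp_meas[OF Xm] .
  have [measurable]: "Yi \<in> borel_measurable M" by (rule Ym)
  have gm[measurable]: "g l \<in> borel_measurable M" for l unfolding g_def inner_p_def by measurable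
  have em[measurable]: "e \<in> borel_measurable M" unfolding e_def inner_p_def by measurable
  have mm[measurable]: "m \<in> borel_measurable M" unfolding m_def
    by (rule meas_Max_ins0) auto
  have Mg: "(\<integral>\<^sup>+\<omega>. ennreal (\<bar>g l \<omega>\<bar>^6) \<partial>M) \<le> ennreal (54 * T^6)" if l: "l < K" for l
  proof -
    have "g l = (\<lambda>\<omega>. inner_p p (Xi \<omega>) (\<lambda>j. be l j - be k j))" unfolding g_def inner_diff ..
    then have E: "(\<integral>\<^sup>+\<omega>. ennreal (exp ((g l \<omega> / T)\<^sup>2)) \<partial>M) \<le> 2" using SGb beb l by auto
    have "(\<integral>\<^sup>+\<omega>. ennreal (\<bar>g l \<omega>\<bar>^(2 * 3)) \<partial>M) \<le> ennreal (2 * real 3^3 * T^(2 * 3))"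
      by (rule moment_from_exp[OF gm T E]) simp
    then show ?thesis by simp
  qed
  have Me: "(\<integral>\<^sup>+\<omega>. ennreal (\<bar>e \<omega>\<bar>^6) \<partial>M) \<le> ennreal (Ae_c K sg T)"
  proof -
    have "(\<integral>\<^sup>+\<omega>. ennreal (\<bar>e \<omega>\<bar>^6) \<partial>M)
        \<le> (\<integral>\<^sup>+\<omega>. ennreal (64 * (\<Sum>l<K. 15 * (sg l)^6 + \<bar>g l \<omega>\<bar>^6)) \<partial>M)"
      unfolding e_def g_def by (rule y_moment[OF Xm Ym model K k sg])
    also have "\<dots> \<le> ennreal (64 * (15 * (\<Sum>l<K. (sg l)^6)) + (\<Sum>l<K. 64 * (54 * T^6)))"
    proof (rule nn_lin_bound)
      show "\<forall>l\<in>{..<K}. (\<integral>\<^sup>+\<omega>. ennreal (\<bar>g l \<omega>\<bar>^6) \<partial>M) \<le> ennreal (54 * T^6)" using Mg by auto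
      show "\<forall>x\<in>space M. 64 * (\<Sum>l<K. 15 * (sg l)^6 + \<bar>g l x\<bar>^6) \<le> 64 * (15 * (\<Sum>l<K. (sg l)^6)) + (\<Sum>l<K. 64 * \<bar>g l x\<bar>^6)"
        by (simp add: sum.distrib sum_distrib_left)
    qed (use sg T in \<open>auto intro!: sum_nonneg\<close>)
    also have "\<dots> = ennreal (Ae_c K sg T)" unfolding Ae_c_def by simp
    finally show ?thesis .
  qed
  have Xj: "\<forall>j<p. (\<integral>\<^sup>+\<omega>. ennreal (exp ((Xi \<omega> j / T)\<^sup>2)) \<partial>M) \<le> 2"
  proof (intro allI impI)
    fix j assume j: "j < p"
    define ej where "ej = (\<lambda>i. if i = j then 1 else (0::real))"
    have n1: "norm2_p p ej = 1" unfolding norm2_p_def ej_def using j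
      by (simp add: if_distrib[of "\<lambda>z. z\<^sup>2"] sum.delta cong: if_cong)
    have iej: "inner_p p x ej = x j" for x unfolding inner_p_def ej_def using j
      by (simp add: if_distrib[of "\<lambda>z. x _ * z"] sum.delta cong: if_cong)
    show "(\<integral>\<^sup>+\<omega>. ennreal (exp ((Xi \<omega> j / T)\<^sup>2)) \<partial>M) \<le> 2" using SGb[rule_format, of ej] n1 Bb iej by simp
  qed
  have Mm4: "(\<integral>\<^sup>+\<omega>. ennreal ((m \<omega>)^4) \<partial>M) \<le> ennreal (T^4 * ((2 * L)^2 + 16))"
    using max_moment[of p "\<lambda>j \<omega>. Xi \<omega> j" T 2] Xj T unfolding m_def L_def by (simp add: numeral_eq_Suc)
  have Mm6: "(\<integral>\<^sup>+\<omega>. ennreal ((m \<omega>)^6) \<partial>M) \<le> ennreal (T^6 * ((2 * L)^3 + 216))"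
    using max_moment[of p "\<lambda>j \<omega>. Xi \<omega> j" T 3] Xj T unfolding m_def L_def by (simp add: numeral_eq_Suc)
  have m0: "m \<omega> \<ge> 0" for \<omega> unfolding m_def by (rule Max_ins0_nonneg)
  have a0: "a \<omega> \<ge> 0" for \<omega> unfolding a_def by (rule Max_ins0_nonneg)
  have a6: "(1 + a \<omega>)^6 \<le> 4096 * (1 + \<bar>e \<omega>\<bar>^6 + (\<Sum>l<K. \<bar>g l \<omega>\<bar>^6))" for \<omega>
  proof (rule a_pow6)
    define G where "G = Max (insert 0 ((\<lambda>l. \<bar>g l \<omega>\<bar>) ` {..<K}))"
    show "0 \<le> G" unfolding G_def by (rule Max_ins0_nonneg)
    show "G^6 \<le> (\<Sum>l<K. \<bar>g l \<omega>\<bar>^6)" unfolding G_def by (rule Max_ins0_pow_le_sum) simp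
    show "0 \<le> a \<omega>" by (rule a0)
    show "a \<omega> \<le> \<bar>e \<omega>\<bar> + G" unfolding a_def
    proof (rule Max_ins0_le)
      show "0 \<le> \<bar>e \<omega>\<bar> + G" using \<open>0 \<le> G\<close> by simp
      show "\<forall>l<K. \<bar>Yi \<omega> - inner_p p (Xi \<omega>) (be l)\<bar> \<le> \<bar>e \<omega>\<bar> + G"
      proof (intro allI impI)
        fix l assume l: "l < K"
        have "Yi \<omega> - inner_p p (Xi \<omega>) (be l) = e \<omega> - g l \<omega>" unfolding e_def g_def by simp
        moreover have "\<bar>g l \<omega>\<bar> \<le> G" unfolding G_def using l by (intro Max_ins0_ge)
        ultimately show "\<bar>Yi \<omega> - inner_p p (Xi \<omega>) (be l)\<bar> \<le> \<bar>e \<omega>\<bar> + G" by linarith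
      qed
    qed
  qed
  have Ae0: "Ae_c K sg T \<ge> 0" unfolding Ae_c_def using T by (simp add: sum_nonneg)
  have A6eq: "A6_c K sg T = 4096 * (1 + Ae_c K sg T + real K * (54 * T^6))" unfolding A6_c_def ..
  have LL': "L \<le> L'" unfolding L'_def by simp
  have cases3: "\<forall>i<K+2. i < K \<or> i = K \<or> i = K + 1" by auto
  define f1 where "f1 = (\<lambda>i \<omega>. if i < K then \<bar>g i \<omega>\<bar>^6 else if i = K then \<bar>e \<omega>\<bar>^6 else (m \<omega>)^4)"
  define c1 where "c1 = (\<lambda>i. if i \<le> K then 4096 * L' else 16 / L')"
  define r1 where "r1 = (\<lambda>i. if i < K then 54 * T^6 else if i = K then Ae_c K sg T else T^4 * ((2 * L)^2 + 16))"
  have H1: "(\<integral>\<^sup>+\<omega>. ennreal ((1 + a \<omega>)^3 * (1 + m \<omega>)^2) \<partial>M)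
      \<le> ennreal ((4096 * L' + 16 / L') + (\<Sum>i\<in>{..<K+2}. c1 i * r1 i))"
  proof (rule nn_lin_bound)
    show "\<forall>i\<in>{..<K + 2}. f1 i \<in> borel_measurable M" unfolding f1_def by auto
    show "\<forall>i\<in>{..<K + 2}. \<forall>x. 0 \<le> f1 i x" unfolding f1_def using m0 by auto
    show "\<forall>i\<in>{..<K + 2}. 0 \<le> c1 i" unfolding c1_def using L'1 by auto
    show "0 \<le> 4096 * L' + 16 / L'" using L'1 by auto
    show "\<forall>i\<in>{..<K + 2}. 0 \<le> r1 i" unfolding r1_def using Ae0 T L0 by auto
    show "\<forall>i\<in>{..<K + 2}. (\<integral>\<^sup>+x. ennreal (f1 i x) \<partial>M) \<le> ennreal (r1 i)"
    proof
      fix i assume "i \<in> {..<K + 2}"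
      then consider "i < K" | "i = K" | "i = K + 1" by fastforce
      then show "(\<integral>\<^sup>+x. ennreal (f1 i x) \<partial>M) \<le> ennreal (r1 i)"
        by cases (use Mg Me Mm4 in \<open>auto simp: f1_def r1_def\<close>)
    qed
    show "\<forall>x\<in>space M. (1 + a x)^3 * (1 + m x)^2 \<le> (4096 * L' + 16 / L') + (\<Sum>i\<in>{..<K+2}. c1 i * f1 i x)"
    proof
      fix x
      have "(1 + a x)^3 * (1 + m x)^2 \<le> (L' * ((1 + a x)^3)\<^sup>2 + ((1 + m x)^2)\<^sup>2 / L') / 2"
        using L'1 by (intro amgm) auto
      also have "\<dots> \<le> L' * (1 + a x)^6 + (1 + m x)^4 / L'"
        using L'1 a0[of x] m0[of x] by (simp add: power_mult[symmetric] field_simps)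
      also have "\<dots> \<le> L' * (4096 * (1 + \<bar>e x\<bar>^6 + (\<Sum>l<K. \<bar>g l x\<bar>^6))) + (2^4 * (1 + (m x)^4)) / L'"
        using L'1 a6[of x] one_plus_pow[OF m0[of x], of 4]
        by (intro add_mono mult_left_mono divide_right_mono) auto
      also have "\<dots> = (4096 * L' + 16 / L') + (\<Sum>i\<in>{..<K+2}. c1 i * f1 i x)"
        unfolding c1_def f1_def
        by (simp add: numeral_2_eq_2 algebra_simps sum_distrib_left sum_distrib_right add_divide_distrib)
      finally show "(1 + a x)^3 * (1 + m x)^2 \<le> (4096 * L' + 16 / L') + (\<Sum>i\<in>{..<K+2}. c1 i * f1 i x)" .
    qed
  qed simp
  have S1: "(\<Sum>i\<in>{..<K+2}. c1 i * r1 i) = real K * (4096 * L' * (54 * T^6)) + 4096 * L' * Ae_c K sg T + 16 / L' * (T^4 * ((2 * L)^2 + 16))"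
    unfolding c1_def r1_def by (simp add: numeral_2_eq_2)
  have fin1: "(4096 * L' + 16 / L') + (\<Sum>i\<in>{..<K+2}. c1 i * r1 i) \<le> C1_c K sg T * L'"
  proof -
    have Lq: "L^2 / L' \<le> L'"
    proof -
      have "L^2 \<le> L'^2" using L0 LL' by (intro power_mono) auto
      then show ?thesis using L'1 by (simp add: field_simps power2_eq_square)
    qed
    have f1: "16 / L' \<le> 16 * L'" using L'1 by (simp add: field_simps) (smt (verit) mult_le_cancel_left1)
    have f2: "T^4 * (L^2 / L') \<le> T^4 * L'" using Lq T by (intro mult_left_mono) auto
    have f3: "T^4 / L' \<le> T^4 * L'"
    proof -
      have "T^4 / L' \<le> T^4 / 1" using L'1 T by (intro divide_left_mono) auto
      also have "\<dots> \<le> T^4 * L'" using L'1 T by simp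
      finally show ?thesis .
    qed
    have id: "16 / L' * (T^4 * ((2 * L)^2 + 16)) = 64 * (T^4 * (L^2 / L')) + 256 * (T^4 / L')"
      using L'1 by (simp add: field_simps power2_eq_square)
    define X0 where "X0 = 16 / L'"
    define X1 where "X1 = T^4 * (L^2 / L')"
    define X2 where "X2 = T^4 / L'"
    have "(4096 * L' + 16 / L') + (\<Sum>i\<in>{..<K+2}. c1 i * r1 i)
        = 4096 * L' * (1 + Ae_c K sg T + real K * (54 * T^6)) + X0 + 64 * X1 + 256 * X2"
    proof -
      have id': "X0 * (T^4 * ((2 * L)^2 + 16)) = 64 * X1 + 256 * X2" using id unfolding X0_def X1_def X2_def .
      show ?thesis unfolding S1 X0_def[symmetric] id' by (simp add: algebra_simps)
    qed
    moreover have "C1_c K sg T * L' = 4096 * L' * (1 + Ae_c K sg T + real K * (54 * T^6)) + 16 * L' + 320 * (T^4 * L')"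
      unfolding C1_c_def A6eq by (simp add: algebra_simps)
    ultimately show ?thesis using f1 f2 f3 unfolding X0_def[symmetric] X1_def[symmetric] X2_def[symmetric] by linarith
  qed
  define f2 where "f2 = (\<lambda>i \<omega>. if i < K then \<bar>g i \<omega>\<bar>^6 else if i = K then \<bar>e \<omega>\<bar>^6 else (m \<omega>)^6)"
  define c2 where "c2 = (\<lambda>i. if i \<le> K then 4096 * L'^2 else 64 / L'^2)"
  define r2 where "r2 = (\<lambda>i. if i < K then 54 * T^6 else if i = K then Ae_c K sg T else T^6 * ((2 * L)^3 + 216))"
  have H2: "(\<integral>\<^sup>+\<omega>. ennreal ((1 + a \<omega>)^3 * (1 + m \<omega>)^3) \<partial>M)
      \<le> ennreal ((4096 * L'^2 + 64 / L'^2) + (\<Sum>i\<in>{..<K+2}. c2 i * r2 i))"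
  proof (rule nn_lin_bound)
    show "\<forall>i\<in>{..<K + 2}. f2 i \<in> borel_measurable M" unfolding f2_def by auto
    show "\<forall>i\<in>{..<K + 2}. \<forall>x. 0 \<le> f2 i x" unfolding f2_def using m0 by auto
    show "\<forall>i\<in>{..<K + 2}. 0 \<le> c2 i" unfolding c2_def using L'1 by auto
    show "0 \<le> 4096 * L'^2 + 64 / L'^2" using L'1 by auto
    show "\<forall>i\<in>{..<K + 2}. 0 \<le> r2 i" unfolding r2_def using Ae0 T L0 by auto
    show "\<forall>i\<in>{..<K + 2}. (\<integral>\<^sup>+x. ennreal (f2 i x) \<partial>M) \<le> ennreal (r2 i)"
    proof
      fix i assume "i \<in> {..<K + 2}"
      then consider "i < K" | "i = K" | "i = K + 1" by fastforce
      then show "(\<integral>\<^sup>+x. ennreal (f2 i x) \<partial>M) \<le> ennreal (r2 i)"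
        by cases (use Mg Me Mm6 in \<open>auto simp: f2_def r2_def\<close>)
    qed
    show "\<forall>x\<in>space M. (1 + a x)^3 * (1 + m x)^3 \<le> (4096 * L'^2 + 64 / L'^2) + (\<Sum>i\<in>{..<K+2}. c2 i * f2 i x)"
    proof
      fix x
      have "(1 + a x)^3 * (1 + m x)^3 \<le> (L'^2 * ((1 + a x)^3)\<^sup>2 + ((1 + m x)^3)\<^sup>2 / L'^2) / 2"
        using L'1 by (intro amgm) auto
      also have "\<dots> \<le> L'^2 * (1 + a x)^6 + (1 + m x)^6 / L'^2"
        using L'1 a0[of x] m0[of x] by (simp add: power_mult[symmetric] field_simps)
      also have "\<dots> \<le> L'^2 * (4096 * (1 + \<bar>e x\<bar>^6 + (\<Sum>l<K. \<bar>g l x\<bar>^6))) + (2^6 * (1 + (m x)^6)) / L'^2"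
        using L'1 a6[of x] one_plus_pow[OF m0[of x], of 6]
        by (intro add_mono mult_left_mono divide_right_mono) auto
      also have "\<dots> = (4096 * L'^2 + 64 / L'^2) + (\<Sum>i\<in>{..<K+2}. c2 i * f2 i x)"
        unfolding c2_def f2_def
        by (simp add: numeral_2_eq_2 algebra_simps sum_distrib_left sum_distrib_right add_divide_distrib)
      finally show "(1 + a x)^3 * (1 + m x)^3 \<le> (4096 * L'^2 + 64 / L'^2) + (\<Sum>i\<in>{..<K+2}. c2 i * f2 i x)" .
    qed
  qed simp
  have S2: "(\<Sum>i\<in>{..<K+2}. c2 i * r2 i) = real K * (4096 * L'^2 * (54 * T^6)) + 4096 * L'^2 * Ae_c K sg T + 64 / L'^2 * (T^6 * ((2 * L)^3 + 216))"
    unfolding c2_def r2_def by (simp add: numeral_2_eq_2)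
  have fin2: "(4096 * L'^2 + 64 / L'^2) + (\<Sum>i\<in>{..<K+2}. c2 i * r2 i) \<le> C2_c K sg T * L'^2"
  proof -
    have Lq: "L^3 / L'^2 \<le> L'^2"
    proof -
      have "L^3 \<le> L'^3" using L0 LL' by (intro power_mono) auto
      also have "L'^3 \<le> L'^4" using L'1 by (intro power_increasing) auto
      finally show ?thesis using L'1 by (simp add: field_simps power2_eq_square power4_eq_xxxx)
    qed
    have L2: "L'^2 \<ge> 1" using L'1 by simp
    have f1: "64 / L'^2 \<le> 64 * L'^2"
    proof -
      have "64 / L'^2 \<le> 64 / 1" using L2 by (intro divide_left_mono) auto
      then show ?thesis using L2 by simp
    qed
    have f2: "T^6 * (L^3 / L'^2) \<le> T^6 * L'^2" using Lq T by (intro mult_left_mono) auto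
    have f3: "T^6 / L'^2 \<le> T^6 * L'^2"
    proof -
      have "T^6 / L'^2 \<le> T^6 / 1" using L2 T by (intro divide_left_mono) auto
      also have "\<dots> \<le> T^6 * L'^2" using L2 T by simp
      finally show ?thesis .
    qed
    have id: "64 / L'^2 * (T^6 * ((2 * L)^3 + 216)) = 512 * (T^6 * (L^3 / L'^2)) + 13824 * (T^6 / L'^2)"
      using L'1 by (simp add: field_simps power2_eq_square power3_eq_cube)
    define X0 where "X0 = 64 / L'^2"
    define X1 where "X1 = T^6 * (L^3 / L'^2)"
    define X2 where "X2 = T^6 / L'^2"
    have "(4096 * L'^2 + 64 / L'^2) + (\<Sum>i\<in>{..<K+2}. c2 i * r2 i)
        = 4096 * L'^2 * (1 + Ae_c K sg T + real K * (54 * T^6)) + X0 + 512 * X1 + 13824 * X2"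
    proof -
      have id': "X0 * (T^6 * ((2 * L)^3 + 216)) = 512 * X1 + 13824 * X2" using id unfolding X0_def X1_def X2_def .
      show ?thesis unfolding S2 X0_def[symmetric] id' by (simp add: algebra_simps)
    qed
    moreover have "C2_c K sg T * L'^2 = 4096 * L'^2 * (1 + Ae_c K sg T + real K * (54 * T^6)) + 64 * L'^2 + 14336 * (T^6 * L'^2)"
      unfolding C2_c_def A6eq by (simp add: algebra_simps)
    ultimately show ?thesis using f1 f2 f3 unfolding X0_def[symmetric] X1_def[symmetric] X2_def[symmetric] by linarith
  qed
  show "(\<integral>\<^sup>+\<omega>. ennreal ((1 + Max (insert 0 ((\<lambda>l. \<bar>Yi \<omega> - inner_p p (Xi \<omega>) (be l)\<bar>) ` {..<K})))^3
                       * (1 + Max (insert 0 ((\<lambda>j. \<bar>Xi \<omega> j\<bar>) ` {..<p})))^2) \<partial>M)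
          \<le> ennreal (C1_c K sg T * (ln (2 * (real p + 1)) + 1))"
    using H1 fin1 unfolding a_def m_def L'_def L_def by (meson ennreal_leI order_trans)
  show "(\<integral>\<^sup>+\<omega>. ennreal ((1 + Max (insert 0 ((\<lambda>l. \<bar>Yi \<omega> - inner_p p (Xi \<omega>) (be l)\<bar>) ` {..<K})))^3
                       * (1 + Max (insert 0 ((\<lambda>j. \<bar>Xi \<omega> j\<bar>) ` {..<p})))^3) \<partial>M)
          \<le> ennreal (C2_c K sg T * (ln (2 * (real p + 1)) + 1)^2)"
    using H2 fin2 unfolding a_def m_def L'_def L_def by (meson ennreal_leI order_trans)
qed

lemma Z_det:
  fixes n p K k :: nat and Xs :: "nat \<Rightarrow> nat \<Rightarrow> real" and Ys :: "nat \<Rightarrow> real"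
    and al be alh beh :: "nat \<Rightarrow> nat \<Rightarrow> real" and sg sgh :: "nat \<Rightarrow> real" and s D :: real
  assumes k: "k < K" and s: "s > 0" and sgs: "\<forall>l<K. sg l \<ge> s" and Ds: "D \<le> s/2"
    and Ddef: "D = Max ((\<lambda>l. norm1_p p (\<lambda>j. beh l j - be l j) + norm1_p p (\<lambda>j. alh l j - al l j)
                              + \<bar>sgh l - sg l\<bar>) ` {..<K})"
  shows "Max (insert 0 ((\<lambda>j. \<bar>(1 / real n) * (\<Sum>i<n.
            (resp K p alh beh sgh (Xs i) (Ys i) k / (sgh k)\<^sup>2
             - resp K p al be sg (Xs i) (Ys i) k / (sg k)\<^sup>2)
            * (Ys i - inner_p p (Xs i) (be k)) * Xs i j)\<bar>) ` {..<p}))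
    \<le> 400 * (1 + 1/s)^5 * (D * ((1 / real n) * (\<Sum>i<n. (1 + Max (insert 0 ((\<lambda>l. \<bar>Ys i - inner_p p (Xs i) (be l)\<bar>) ` {..<K})))^3
                       * (1 + Max (insert 0 ((\<lambda>j. \<bar>Xs i j\<bar>) ` {..<p})))^2))
          + D\<^sup>2 * ((1 / real n) * (\<Sum>i<n. (1 + Max (insert 0 ((\<lambda>l. \<bar>Ys i - inner_p p (Xs i) (be l)\<bar>) ` {..<K})))^3
                       * (1 + Max (insert 0 ((\<lambda>j. \<bar>Xs i j\<bar>) ` {..<p})))^3)))"
    (is "?Z \<le> ?R")
proof -
  define a where "a = (\<lambda>i. Max (insert 0 ((\<lambda>l. \<bar>Ys i - inner_p p (Xs i) (be l)\<bar>) ` {..<K})))"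
  define m where "m = (\<lambda>i. Max (insert 0 ((\<lambda>j. \<bar>Xs i j\<bar>) ` {..<p})))"
  define Cs where "Cs = 400 * (1 + 1/s)^5"
  have Cs0: "Cs \<ge> 0" unfolding Cs_def using s by simp
  have comp: "norm1_p p (\<lambda>j. beh l j - be l j) \<le> D \<and> norm1_p p (\<lambda>j. alh l j - al l j) \<le> D \<and> \<bar>sgh l - sg l\<bar> \<le> D"
    if l: "l < K" for l
  proof -
    have "norm1_p p (\<lambda>j. beh l j - be l j) + norm1_p p (\<lambda>j. alh l j - al l j) + \<bar>sgh l - sg l\<bar> \<le> D"
      unfolding Ddef using l by (intro Max_ge) auto
    moreover have "norm1_p p u \<ge> 0" for u unfolding norm1_p_def by (simp add: sum_nonneg)
    ultimately show ?thesis by (smt (verit))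
  qed
  have D0: "D \<ge> 0" using comp[OF k] by linarith
  have m0: "m i \<ge> 0" for i unfolding m_def by (rule Max_ins0_nonneg)
  have a0: "a i \<ge> 0" for i unfolding a_def by (rule Max_ins0_nonneg)
  have tb: "\<bar>(resp K p alh beh sgh (Xs i) (Ys i) k / (sgh k)\<^sup>2 - resp K p al be sg (Xs i) (Ys i) k / (sg k)\<^sup>2)
            * (Ys i - inner_p p (Xs i) (be k)) * Xs i j\<bar> \<le> Cs * (D * (1 + a i)^3 * (1 + m i)^2 + D\<^sup>2 * (1 + a i)^3 * (1 + m i)^3)"
    if j: "j < p" for i j
    unfolding Cs_def
  proof (rule sample_bound[OF k s sgs Ds _ _ _ _ _ j])
    show "\<forall>l<K. norm1_p p (\<lambda>j. beh l j - be l j) \<le> D" using comp by auto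
    show "\<forall>l<K. norm1_p p (\<lambda>j. alh l j - al l j) \<le> D" using comp by auto
    show "\<forall>l<K. \<bar>sgh l - sg l\<bar> \<le> D" using comp by auto
    show "\<forall>j<p. \<bar>Xs i j\<bar> \<le> m i" unfolding m_def by (auto intro: Max_ins0_ge)
    show "\<forall>l<K. \<bar>Ys i - inner_p p (Xs i) (be l)\<bar> \<le> a i" unfolding a_def by (auto intro: Max_ins0_ge)
  qed
  have R0: "0 \<le> ?R" unfolding a_def[symmetric] m_def[symmetric] using s D0 a0 m0
    by (intro mult_nonneg_nonneg add_nonneg_nonneg sum_nonneg) auto
  show ?thesis
  proof (rule Max_ins0_le[OF _ R0], intro allI impI)
    fix j assume j: "j < p"
    have "\<bar>(1 / real n) * (\<Sum>i<n. (resp K p alh beh sgh (Xs i) (Ys i) k / (sgh k)\<^sup>2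
             - resp K p al be sg (Xs i) (Ys i) k / (sg k)\<^sup>2) * (Ys i - inner_p p (Xs i) (be k)) * Xs i j)\<bar>
        = (1 / real n) * \<bar>\<Sum>i<n. (resp K p alh beh sgh (Xs i) (Ys i) k / (sgh k)\<^sup>2
             - resp K p al be sg (Xs i) (Ys i) k / (sg k)\<^sup>2) * (Ys i - inner_p p (Xs i) (be k)) * Xs i j\<bar>"
      by (simp add: abs_mult)
    also have "\<dots> \<le> (1 / real n) * (\<Sum>i<n. Cs * (D * (1 + a i)^3 * (1 + m i)^2 + D\<^sup>2 * (1 + a i)^3 * (1 + m i)^3))"
      by (intro mult_left_mono order_trans[OF sum_abs] sum_mono tb j) auto
    also have "\<dots> = ?R" unfolding a_def m_def Cs_def
      by (simp add: sum.distrib sum_distrib_left algebra_simps)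
    finally show "\<bar>(1 / real n) * (\<Sum>i<n. (resp K p alh beh sgh (Xs i) (Ys i) k / (sgh k)\<^sup>2
             - resp K p al be sg (Xs i) (Ys i) k / (sg k)\<^sup>2) * (Ys i - inner_p p (Xs i) (be k)) * Xs i j)\<bar> \<le> ?R" .
  qed
qed

lemma rate_aux: "(\<lambda>n::nat. (real n powr (1/4) / sqrt (ln (real n))) / sqrt (real n)) \<longlonglongrightarrow> 0"
  by real_asymp

lemma rate:
  fixes p :: "nat \<Rightarrow> nat" and eta :: "nat \<Rightarrow> real"
  assumes p_lim: "filterlim p at_top sequentially"
    and logp: "(\<lambda>n. ln (real (p n))) \<in> o(\<lambda>n. real n powr (1/4) / sqrt (ln (real n)))"
    and eta_rate: "(\<lambda>n. sqrt (real n) * ln (real n * real (p n)) * (eta n)\<^sup>2) \<longlonglongrightarrow> 0"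
  shows "(\<lambda>n. eta n * (ln (2 * (real (p n) + 1)) + 1)) \<longlonglongrightarrow> 0"
proof -
  define r where "r = (\<lambda>n. sqrt (real n) * ln (real n * real (p n)) * (eta n)\<^sup>2)"
  define g where "g = (\<lambda>n::nat. real n powr (1/4) / sqrt (ln (real n)))"
  define q where "q = (\<lambda>n. ln (real (p n)) / sqrt (real n))"
  have r0: "r \<longlonglongrightarrow> 0" using eta_rate unfolding r_def .
  have q0: "q \<longlonglongrightarrow> 0"
  proof -
    have t1: "(\<lambda>n. ln (real (p n)) / g n) \<longlonglongrightarrow> 0" using smalloD_tendsto[OF logp] unfolding g_def .
    have t2: "(\<lambda>n. g n / sqrt (real n)) \<longlonglongrightarrow> 0" unfolding g_def by (rule rate_aux)
    have "(\<lambda>n. (ln (real (p n)) / g n) * (g n / sqrt (real n))) \<longlonglongrightarrow> 0 * 0"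
      by (intro tendsto_mult t1 t2)
    moreover have "eventually (\<lambda>n. (ln (real (p n)) / g n) * (g n / sqrt (real n)) = q n) sequentially"
    proof (rule eventually_sequentiallyI[of 2])
      fix n :: nat assume n: "n \<ge> 2"
      have "ln (real n) > 0" using n by simp
      then have "g n \<noteq> 0" unfolding g_def using n by simp
      then show "(ln (real (p n)) / g n) * (g n / sqrt (real n)) = q n" unfolding q_def by simp
    qed
    ultimately show ?thesis by (simp add: tendsto_cong)
  qed
  have pev: "eventually (\<lambda>n. p n \<ge> 1) sequentially"
    using p_lim by (simp add: filterlim_at_top)
  have bound: "eventually (\<lambda>n. (eta n * (ln (2 * (real (p n) + 1)) + 1))\<^sup>2 \<le> 2 * (r n * q n) + 18 * r n) sequentially"
    using pev eventually_ge_at_top[of "3::nat"]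
  proof eventually_elim
    case (elim n)
    have p1: "real (p n) \<ge> 1" using elim by simp
    have n3: "real n \<ge> 3" using elim by simp
    have lnn: "ln (real n) \<ge> 1"
    proof -
      have "exp 1 \<le> (3::real)" using exp_le by simp
      also have "\<dots> \<le> real n" using n3 .
      finally show ?thesis using n3 by (subst ln_ge_iff) auto
    qed
    have lnp0: "ln (real (p n)) \<ge> 0" using p1 by simp
    have lnnp: "ln (real n * real (p n)) = ln (real n) + ln (real (p n))" using p1 n3 by (simp add: ln_mult)
    have sq1: "sqrt (real n) \<ge> 1" using n3 by simp
    define den where "den = sqrt (real n) * ln (real n * real (p n))"
    have den1: "den \<ge> 1" unfolding den_def lnnp using sq1 lnn lnp0
      by (metis add_increasing2 mult_ge1_I)
    have rr: "r n = den * (eta n)\<^sup>2" unfolding r_def den_def by simp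
    have e1: "(eta n)\<^sup>2 \<le> r n" unfolding rr using den1 by (simp add: mult_le_cancel_right1)
    have e2: "(eta n)\<^sup>2 * (ln (real (p n)))\<^sup>2 \<le> r n * q n"
    proof -
      have "ln (real (p n)) \<le> ln (real n * real (p n))" unfolding lnnp using lnn by simp
      then have "(ln (real (p n)))\<^sup>2 \<le> ln (real (p n)) * ln (real n * real (p n))"
        using lnp0 by (simp add: power2_eq_square mult_left_mono)
      then have "(eta n)\<^sup>2 * (ln (real (p n)))\<^sup>2 \<le> (eta n)\<^sup>2 * (ln (real (p n)) * ln (real n * real (p n)))"
        by (intro mult_left_mono) auto
      also have "\<dots> = r n * q n" unfolding r_def q_def using n3 by (simp add: field_simps)
      finally show ?thesis .
    qed
    have Lb: "ln (2 * (real (p n) + 1)) + 1 \<le> ln (real (p n)) + 3"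
    proof -
      have "ln (2 * (real (p n) + 1)) \<le> ln (4 * real (p n))" using p1 by simp
      also have "\<dots> = ln 4 + ln (real (p n))" using p1 by (simp add: ln_mult)
      also have "ln (4::real) \<le> 2"
      proof -
        have e1: "2 \<le> exp (1::real)" using exp_ge_add_one_self[of 1] by simp
        have "(4::real) \<le> exp 1 * exp 1" using mult_mono[OF e1 e1] by simp
        also have "exp 1 * exp 1 = exp (2::real)" by (simp add: exp_add[symmetric])
        finally have "(4::real) \<le> exp 2" .
        then have "ln (4::real) \<le> ln (exp 2)" by (subst ln_le_cancel_iff) auto
        then show ?thesis by simp
      qed
      finally show ?thesis by linarith
    qed
    have L0: "0 \<le> ln (2 * (real (p n) + 1)) + 1" by simp
    have "(eta n * (ln (2 * (real (p n) + 1)) + 1))\<^sup>2 = (eta n)\<^sup>2 * (ln (2 * (real (p n) + 1)) + 1)\<^sup>2"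
      by (simp add: power_mult_distrib)
    also have "\<dots> \<le> (eta n)\<^sup>2 * (ln (real (p n)) + 3)\<^sup>2"
      using Lb L0 by (intro mult_left_mono power_mono) auto
    also have "\<dots> \<le> (eta n)\<^sup>2 * (2 * (ln (real (p n)))\<^sup>2 + 18)"
    proof -
      have sq: "0 \<le> (ln (real (p n)) - 3)\<^sup>2" by simp
      have "(ln (real (p n)) + 3)\<^sup>2 \<le> 2 * (ln (real (p n)))\<^sup>2 + 18"
        using sq unfolding power2_eq_square by (simp add: algebra_simps)
      then show ?thesis by (intro mult_left_mono) auto
    qed
    also have "\<dots> = 2 * ((eta n)\<^sup>2 * (ln (real (p n)))\<^sup>2) + 18 * (eta n)\<^sup>2" by (simp add: algebra_simps)
    also have "\<dots> \<le> 2 * (r n * q n) + 18 * r n" using e1 e2 by linarith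
    finally show ?case .
  qed
  have sq0: "(\<lambda>n. (eta n * (ln (2 * (real (p n) + 1)) + 1))\<^sup>2) \<longlonglongrightarrow> 0"
  proof (rule tendsto_sandwich[OF _ bound])
    show "eventually (\<lambda>n. 0 \<le> (eta n * (ln (2 * (real (p n) + 1)) + 1))\<^sup>2) sequentially" by simp
    show "(\<lambda>n. 0::real) \<longlonglongrightarrow> 0" by simp
    have "(\<lambda>n. 2 * (r n * q n) + 18 * r n) \<longlonglongrightarrow> 2 * (0 * 0) + 18 * 0"
      by (intro tendsto_intros r0 q0)
    then show "(\<lambda>n. 2 * (r n * q n) + 18 * r n) \<longlonglongrightarrow> 0" by simp
  qed
  have "(\<lambda>n. sqrt ((eta n * (ln (2 * (real (p n) + 1)) + 1))\<^sup>2)) \<longlonglongrightarrow> sqrt 0"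
    by (intro tendsto_real_sqrt sq0)
  then have "(\<lambda>n. \<bar>eta n * (ln (2 * (real (p n) + 1)) + 1)\<bar>) \<longlonglongrightarrow> 0" by simp
  then show ?thesis by (simp add: tendsto_rabs_zero_iff)
qed

lemma (in prob_space) SGb_derive:
  fixes Xi :: "'a \<Rightarrow> nat \<Rightarrow> real"
  assumes Xm: "Xi \<in> measurable M (PiM {..<p} (\<lambda>_. borel))" and inv: "is_inv_sqrt p R S"
    and Ssym: "\<forall>i<p. \<forall>j<p. S i j = S j i"
    and Sop: "\<forall>u. norm2_p p (matvec p S u) \<le> C * norm2_p p u"
    and SG: "\<forall>u. norm2_p p u = 1 \<longrightarrow> subgaussian M (\<lambda>\<omega>. inner_p p u (matvec p R (Xi \<omega>)))
                 \<and> psi2_norm M (\<lambda>\<omega>. inner_p p u (matvec p R (Xi \<omega>))) \<le> Cg"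
    and Bb: "Bb \<ge> 1"
  shows "\<forall>b. norm2_p p b \<le> Bb \<longrightarrow> (\<integral>\<^sup>+\<omega>. ennreal (exp ((inner_p p (Xi \<omega>) b / (sqrt (max C 1) * Bb * (\<bar>Cg\<bar> + 1)))\<^sup>2)) \<partial>M) \<le> 2"
proof (intro allI impI)
  fix b assume b: "norm2_p p b \<le> Bb"
  define v where "v = wv p R S b"
  have nb0: "norm2_p p b \<ge> 0" by (rule norm2_nonneg)
  have "(norm2_p p v)\<^sup>2 \<le> C * (norm2_p p b)\<^sup>2" unfolding v_def by (rule LA3[OF inv Ssym Sop])
  also have "\<dots> \<le> max C 1 * Bb\<^sup>2"
  proof (cases "C \<le> 0")
    case True
    then have "C * (norm2_p p b)\<^sup>2 \<le> 0" by (simp add: mult_nonpos_nonneg)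
    also have "0 \<le> max C 1 * Bb\<^sup>2" by simp
    finally show ?thesis .
  next
    case False
    have "(norm2_p p b)\<^sup>2 \<le> Bb\<^sup>2" using b nb0 by (intro power_mono) auto
    moreover have c1: "C \<le> max C 1" by (rule max.cobounded1)
    moreover have c2: "0 \<le> max C 1" using max.cobounded2[of 1 C] by linarith
    ultimately show ?thesis using mult_mono[OF c1 _ c2 zero_le_power2] by blast
  qed
  also have "max C 1 * Bb\<^sup>2 = (sqrt (max C 1) * Bb)\<^sup>2"
  proof -
    have c2: "0 \<le> max C 1" using max.cobounded2[of 1 C] by linarith
    show ?thesis by (simp only: power_mult_distrib real_sqrt_pow2[OF c2])
  qed
  finally have "(norm2_p p v)\<^sup>2 \<le> (sqrt (max C 1) * Bb)\<^sup>2" .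
  have s0: "sqrt (max C 1) * Bb > 0"
  proof -
    have "max C 1 \<ge> 1" by (rule max.cobounded2)
    then have "sqrt (max C 1) \<ge> 1" by simp
    then show ?thesis using Bb by (intro mult_pos_pos) auto
  qed
  have vb: "norm2_p p v \<le> sqrt (max C 1) * Bb"
    by (rule power2_le_imp_le[OF \<open>(norm2_p p v)\<^sup>2 \<le> (sqrt (max C 1) * Bb)\<^sup>2\<close>]) (use s0 in linarith)
  have base: "(\<integral>\<^sup>+\<omega>. ennreal (exp ((inner_p p v (matvec p R (Xi \<omega>)) / ((sqrt (max C 1) * Bb) * (\<bar>Cg\<bar> + 1)))\<^sup>2)) \<partial>M) \<le> 2"
    by (rule sg_scaled[OF Xm SG vb s0])
  have eqi: "inner_p p (Xi \<omega>) b = inner_p p v (matvec p R (Xi \<omega>))" for \<omega>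
    unfolding v_def by (rule LA2[OF inv])
  show "(\<integral>\<^sup>+\<omega>. ennreal (exp ((inner_p p (Xi \<omega>) b / (sqrt (max C 1) * Bb * (\<bar>Cg\<bar> + 1)))\<^sup>2)) \<partial>M) \<le> 2"
    unfolding eqi by (rule base)
qed

lemma (in prob_space) markov_meas:
  fixes f :: "'a \<Rightarrow> real"
  assumes f: "f \<in> borel_measurable M" and t: "t > 0" and r: "r \<ge> 0"
    and E: "(\<integral>\<^sup>+\<omega>. ennreal (f \<omega>) \<partial>M) \<le> ennreal r"
  shows "measure M {\<omega> \<in> space M. f \<omega> \<ge> t} \<le> r / t"
proof -
  have "emeasure M {\<omega> \<in> space M. f \<omega> \<ge> t} \<le> (\<integral>\<^sup>+\<omega>. ennreal (f \<omega>) \<partial>M) / ennreal t"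
    by (rule markov_nn[OF f t])
  also have "\<dots> \<le> ennreal r / ennreal t" using E by (intro divide_right_mono_ennreal)
  also have "\<dots> = ennreal (r / t)" using r t by (simp add: divide_ennreal)
  finally have "ennreal (measure M {\<omega> \<in> space M. f \<omega> \<ge> t}) \<le> ennreal (r / t)"
    by (simp add: emeasure_eq_measure)
  then show ?thesis using r t by (simp add: ennreal_le_iff)
qed

lemma (in prob_space) avg_moment:
  fixes H :: "nat \<Rightarrow> 'a \<Rightarrow> real"
  assumes Hm: "\<forall>i<n. H i \<in> borel_measurable M" and H0: "\<forall>i<n. \<forall>\<omega>. H i \<omega> \<ge> 0"
    and HE: "\<forall>i<n. (\<integral>\<^sup>+\<omega>. ennreal (H i \<omega>) \<partial>M) \<le> ennreal r" and r: "r \<ge> 0" and c: "c \<ge> 0"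
  shows "(\<integral>\<^sup>+\<omega>. ennreal (c * ((1 / real n) * (\<Sum>i<n. H i \<omega>))) \<partial>M) \<le> ennreal (c * r)"
proof -
  have "(\<integral>\<^sup>+\<omega>. ennreal (c * ((1 / real n) * (\<Sum>i<n. H i \<omega>))) \<partial>M) \<le> ennreal (0 + (\<Sum>i\<in>{..<n}. (c / real n) * r))"
  proof (rule nn_lin_bound)
    show "\<forall>x\<in>space M. c * ((1 / real n) * (\<Sum>i<n. H i x)) \<le> 0 + (\<Sum>i\<in>{..<n}. (c / real n) * H i x)"
      by (simp add: sum_distrib_left)
  qed (use Hm H0 HE r c in auto)
  also have "\<dots> \<le> ennreal (c * r)"
  proof (intro ennreal_leI)
    show "0 + (\<Sum>i\<in>{..<n}. (c / real n) * r) \<le> c * r"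
      using c r by (cases "n = 0") auto
  qed
  finally show ?thesis .
qed

theorem proposition4:
  fixes M :: "'a measure" and K :: nat and p :: "nat \<Rightarrow> nat"
    and X :: "nat \<Rightarrow> nat \<Rightarrow> 'a \<Rightarrow> nat \<Rightarrow> real" and Y :: "nat \<Rightarrow> nat \<Rightarrow> 'a \<Rightarrow> real"
    and beta alpha :: "nat \<Rightarrow> nat \<Rightarrow> nat \<Rightarrow> real" and sig :: "nat \<Rightarrow> real"
    and beta_hat alpha_hat :: "nat \<Rightarrow> nat \<Rightarrow> 'a \<Rightarrow> nat \<Rightarrow> real"
    and sig_hat :: "nat \<Rightarrow> nat \<Rightarrow> 'a \<Rightarrow> real"
    and eta :: "nat \<Rightarrow> real"
    and Sig R :: "nat \<Rightarrow> nat \<Rightarrow> nat \<Rightarrow> real" and C_Sig :: real and k :: nat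
  assumes M: "prob_space M"
    and k: "k < K"
    and p_lim: "filterlim p at_top sequentially"
    and logp: "(\<lambda>n. ln (real (p n))) \<in> o(\<lambda>n. real n powr (1/4) / sqrt (ln (real n)))"
    \<comment> \<open>data: for each n, (x_i, y_i), i < n, are i.i.d. draws from the MoE model\<close>
    and X_rv: "\<forall>n i. i < n \<longrightarrow> X n i \<in> measurable M (PiM {..<p n} (\<lambda>_. borel))"
    and Y_rv: "\<forall>n i. i < n \<longrightarrow> Y n i \<in> borel_measurable M"
    and indep: "\<forall>n. prob_space.indep_vars M (\<lambda>_. PiM {..<p n} (\<lambda>_. borel) \<Otimes>\<^sub>M borel)
                      (\<lambda>i \<omega>. (X n i \<omega>, Y n i \<omega>)) {..<n}"
    and ident: "\<forall>n i. i < n \<longrightarrow>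
                  distr M (PiM {..<p n} (\<lambda>_. borel)) (X n i) = distr M (PiM {..<p n} (\<lambda>_. borel)) (X n 0)"
    and model: "\<forall>n i. i < n \<longrightarrow>
                  distr M (PiM {..<p n} (\<lambda>_. borel) \<Otimes>\<^sub>M borel) (\<lambda>\<omega>. (X n i \<omega>, Y n i \<omega>)) =
                  bind (distr M (PiM {..<p n} (\<lambda>_. borel)) (X n i))
                    (\<lambda>x. distr (density lborel (\<lambda>y. ennreal (moe_density K (p n) (alpha n) (beta n) sig x y)))
                               (PiM {..<p n} (\<lambda>_. borel) \<Otimes>\<^sub>M borel) (\<lambda>y. (x, y)))"
    \<comment> \<open>estimators are random variables\<close>
    and beta_hat_rv: "\<forall>n l j. (\<lambda>\<omega>. beta_hat n l \<omega> j) \<in> borel_measurable M"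
    and alpha_hat_rv: "\<forall>n l j. (\<lambda>\<omega>. alpha_hat n l \<omega> j) \<in> borel_measurable M"
    and sig_hat_rv: "\<forall>n l. sig_hat n l \<in> borel_measurable M"
    \<comment> \<open>(A1)\<close>
    and A1: "O_p M (\<lambda>n \<omega>. Max ((\<lambda>l. norm1_p (p n) (\<lambda>j. beta_hat n l \<omega> j - beta n l j)
                                    + norm1_p (p n) (\<lambda>j. alpha_hat n l \<omega> j - alpha n l j)
                                    + \<bar>sig_hat n l \<omega> - sig l\<bar>) ` {..<K})) eta"
    and eta_rate: "(\<lambda>n. sqrt (real n) * ln (real n * real (p n)) * (eta n)\<^sup>2) \<longlonglongrightarrow> 0"
    \<comment> \<open>(A2)\<close>
    and Sig_sym: "\<forall>n. \<forall>i<p n. \<forall>j<p n. Sig n i j = Sig n j i"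
    and Sig_psd: "\<forall>n u. inner_p (p n) u (matvec (p n) (Sig n) u) \<ge> 0"
    and Sig_op: "\<forall>n u. norm2_p (p n) (matvec (p n) (Sig n) u) \<le> C_Sig * norm2_p (p n) u"
    and R_inv_sqrt: "\<forall>n. is_inv_sqrt (p n) (R n) (Sig n)"
    and mean_zero: "\<forall>n i j. i < n \<and> j < p n \<longrightarrow>
                      integrable M (\<lambda>\<omega>. matvec (p n) (R n) (X n i \<omega>) j) \<and>
                      (\<integral>\<omega>. matvec (p n) (R n) (X n i \<omega>) j \<partial>M) = 0"
    and subg: "\<exists>C. \<forall>n i u. i < n \<and> norm2_p (p n) u = 1 \<longrightarrow>
                 subgaussian M (\<lambda>\<omega>. inner_p (p n) u (matvec (p n) (R n) (X n i \<omega>))) \<and>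
                 psi2_norm M (\<lambda>\<omega>. inner_p (p n) u (matvec (p n) (R n) (X n i \<omega>))) \<le> C"
    \<comment> \<open>(A3)\<close>
    and sig_pos: "\<forall>l<K. sig l > 0"
    and beta_sep: "\<exists>C. \<forall>n l l'. l < K \<and> l' < K \<longrightarrow> norm2_p (p n) (\<lambda>j. beta n l j - beta n l' j) \<le> C"
  shows "o_p1 M (\<lambda>n \<omega>. Max (insert 0 ((\<lambda>j. \<bar>(1 / real n) * (\<Sum>i<n.
            (resp K (p n) (\<lambda>l. alpha_hat n l \<omega>) (\<lambda>l. beta_hat n l \<omega>) (\<lambda>l. sig_hat n l \<omega>)
                   (X n i \<omega>) (Y n i \<omega>) k / (sig_hat n k \<omega>)\<^sup>2
             - resp K (p n) (alpha n) (beta n) sig (X n i \<omega>) (Y n i \<omega>) k / (sig k)\<^sup>2)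
            * (Y n i \<omega> - inner_p (p n) (X n i \<omega>) (beta n k)) * X n i \<omega> j)\<bar>) ` {..<p n})))"
proof -
  interpret prob_space M by (rule M)
  have K0: "K > 0" using k by simp
  define s where "s = Min (sig ` {..<K})"
  have s0: "s > 0" unfolding s_def using sig_pos K0 by (subst Min_gr_iff) auto
  have sgs: "\<forall>l<K. sig l \<ge> s" unfolding s_def by (auto intro: Min_le)
  obtain Cg where Cg: "\<forall>n i u. i < n \<and> norm2_p (p n) u = 1 \<longrightarrow>
                 subgaussian M (\<lambda>\<omega>. inner_p (p n) u (matvec (p n) (R n) (X n i \<omega>))) \<and>
                 psi2_norm M (\<lambda>\<omega>. inner_p (p n) u (matvec (p n) (R n) (X n i \<omega>))) \<le> Cg"
    using subg by blast
  obtain Cb where Cb: "\<forall>n l l'. l < K \<and> l' < K \<longrightarrow> norm2_p (p n) (\<lambda>j. beta n l j - beta n l' j) \<le> Cb"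
    using beta_sep by blast
  define Bb where "Bb = max Cb 1"
  have Bb1: "Bb \<ge> 1" unfolding Bb_def by simp
  define T where "T = sqrt (max C_Sig 1) * Bb * (\<bar>Cg\<bar> + 1)"
  have T0: "T > 0"
  proof -
    have "max C_Sig 1 \<ge> 1" by (rule max.cobounded2)
    then have "sqrt (max C_Sig 1) \<ge> 1" by simp
    then show ?thesis unfolding T_def using Bb1 by (intro mult_pos_pos) auto
  qed
  define Cs where "Cs = 400 * (1 + 1/s)^5"
  have Cs0: "Cs \<ge> 0" unfolding Cs_def using s0 by simp
  define C1 where "C1 = C1_c K sig T"
  define C2 where "C2 = C2_c K sig T"
  have Ae0: "Ae_c K sig T \<ge> 0" unfolding Ae_c_def using T0 by (simp add: sum_nonneg)
  have C10: "C1 \<ge> 0" unfolding C1_def C1_c_def A6_c_def using Ae0 T0 by simp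
  have C20: "C2 \<ge> 0" unfolding C2_def C2_c_def A6_c_def using Ae0 T0 by simp
  define Lp where "Lp = (\<lambda>n. ln (2 * (real (p n) + 1)) + 1)"
  have Lp1: "Lp n \<ge> 1" for n unfolding Lp_def by simp
  define Dn where "Dn = (\<lambda>n \<omega>. Max ((\<lambda>l. norm1_p (p n) (\<lambda>j. beta_hat n l \<omega> j - beta n l j)
                                    + norm1_p (p n) (\<lambda>j. alpha_hat n l \<omega> j - alpha n l j)
                                    + \<bar>sig_hat n l \<omega> - sig l\<bar>) ` {..<K}))"
  define H1 where "H1 = (\<lambda>n i \<omega>. (1 + Max (insert 0 ((\<lambda>l. \<bar>Y n i \<omega> - inner_p (p n) (X n i \<omega>) (beta n l)\<bar>) ` {..<K})))^3
                       * (1 + Max (insert 0 ((\<lambda>j. \<bar>X n i \<omega> j\<bar>) ` {..<p n})))^2)"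
  define H2 where "H2 = (\<lambda>n i \<omega>. (1 + Max (insert 0 ((\<lambda>l. \<bar>Y n i \<omega> - inner_p (p n) (X n i \<omega>) (beta n l)\<bar>) ` {..<K})))^3
                       * (1 + Max (insert 0 ((\<lambda>j. \<bar>X n i \<omega> j\<bar>) ` {..<p n})))^3)"
  define A1 where "A1 = (\<lambda>n \<omega>. (1 / real n) * (\<Sum>i<n. H1 n i \<omega>))"
  define A2 where "A2 = (\<lambda>n \<omega>. (1 / real n) * (\<Sum>i<n. H2 n i \<omega>))"
  define Zf where "Zf = (\<lambda>n \<omega>. Max (insert 0 ((\<lambda>j. \<bar>(1 / real n) * (\<Sum>i<n.
            (resp K (p n) (\<lambda>l. alpha_hat n l \<omega>) (\<lambda>l. beta_hat n l \<omega>) (\<lambda>l. sig_hat n l \<omega>)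
                   (X n i \<omega>) (Y n i \<omega>) k / (sig_hat n k \<omega>)\<^sup>2
             - resp K (p n) (alpha n) (beta n) sig (X n i \<omega>) (Y n i \<omega>) k / (sig k)\<^sup>2)
            * (Y n i \<omega> - inner_p (p n) (X n i \<omega>) (beta n k)) * X n i \<omega> j)\<bar>) ` {..<p n})))"
  have Zb: "Zf n \<omega> \<le> Cs * (Dn n \<omega> * A1 n \<omega> + (Dn n \<omega>)\<^sup>2 * A2 n \<omega>)" if D: "Dn n \<omega> \<le> s/2" for n \<omega>
    unfolding Zf_def Cs_def A1_def A2_def H1_def H2_def
    by (rule Z_det[OF k s0 sgs D]) (simp add: Dn_def)
  have Dn0: "Dn n \<omega> \<ge> 0" for n \<omega>
  proof -
    have "norm1_p (p n) (\<lambda>j. beta_hat n k \<omega> j - beta n k j) + norm1_p (p n) (\<lambda>j. alpha_hat n k \<omega> j - alpha n k j)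
          + \<bar>sig_hat n k \<omega> - sig k\<bar> \<le> Dn n \<omega>" unfolding Dn_def using k by (intro Max_ge) auto
    moreover have "norm1_p q u \<ge> 0" for q u unfolding norm1_p_def by (simp add: sum_nonneg)
    ultimately show ?thesis by (smt (verit))
  qed
  have H10: "H1 n i \<omega> \<ge> 0" for n i \<omega> unfolding H1_def using Max_ins0_nonneg by (intro mult_nonneg_nonneg) (smt (verit) zero_le_power)+
  have H20: "H2 n i \<omega> \<ge> 0" for n i \<omega> unfolding H2_def using Max_ins0_nonneg by (intro mult_nonneg_nonneg) (smt (verit) zero_le_power)+
  have A10: "A1 n \<omega> \<ge> 0" for n \<omega> unfolding A1_def using H10 by (simp add: sum_nonneg)
  have A20: "A2 n \<omega> \<ge> 0" for n \<omega> unfolding A2_def using H20 by (simp add: sum_nonneg)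
  have Zf0: "Zf n \<omega> \<ge> 0" for n \<omega> unfolding Zf_def by (rule Max_ins0_nonneg)
  have [measurable]: "(\<lambda>\<omega>. beta_hat n l \<omega> j) \<in> borel_measurable M" for n l j using beta_hat_rv by auto
  have [measurable]: "(\<lambda>\<omega>. alpha_hat n l \<omega> j) \<in> borel_measurable M" for n l j using alpha_hat_rv by auto
  have [measurable]: "sig_hat n l \<in> borel_measurable M" for n l using sig_hat_rv by auto
  have Dnm: "Dn n \<in> borel_measurable M" for n
    unfolding Dn_def norm1_p_def by (intro borel_measurable_Max) auto
  have H1m: "H1 n i \<in> borel_measurable M" and H2m: "H2 n i \<in> borel_measurable M" if i: "i < n" for n i
  proof -
    have [measurable]: "(\<lambda>\<omega>. X n i \<omega> j) \<in> borel_measurable M" for j using comp_meas X_rv i by blast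
    have [measurable]: "Y n i \<in> borel_measurable M" using Y_rv i by blast
    have m1: "(\<lambda>\<omega>. Max (insert 0 ((\<lambda>l. \<bar>Y n i \<omega> - inner_p (p n) (X n i \<omega>) (beta n l)\<bar>) ` {..<K}))) \<in> borel_measurable M"
      by (rule meas_Max_ins0) (auto simp: inner_p_def)
    have m2: "(\<lambda>\<omega>. Max (insert 0 ((\<lambda>j. \<bar>X n i \<omega> j\<bar>) ` {..<p n}))) \<in> borel_measurable M"
      by (rule meas_Max_ins0) auto
    show "H1 n i \<in> borel_measurable M" unfolding H1_def using m1 m2 by measurable
    show "H2 n i \<in> borel_measurable M" unfolding H2_def using m1 m2 by measurable
  qed
  have A1m: "A1 n \<in> borel_measurable M" and A2m: "A2 n \<in> borel_measurable M" for n
    unfolding A1_def A2_def using H1m H2m by (auto intro!: borel_measurable_sum borel_measurable_times)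
  have mom: "(\<integral>\<^sup>+\<omega>. ennreal (H1 n i \<omega>) \<partial>M) \<le> ennreal (C1 * Lp n) \<and> (\<integral>\<^sup>+\<omega>. ennreal (H2 n i \<omega>) \<partial>M) \<le> ennreal (C2 * (Lp n)\<^sup>2)"
    if i: "i < n" for n i
  proof -
    have Xm: "X n i \<in> measurable M (PiM {..<p n} (\<lambda>_. borel))" using X_rv i by blast
    have Ym: "Y n i \<in> borel_measurable M" using Y_rv i by blast
    have SGb: "\<forall>b. norm2_p (p n) b \<le> Bb \<longrightarrow> (\<integral>\<^sup>+\<omega>. ennreal (exp ((inner_p (p n) (X n i \<omega>) b / T)\<^sup>2)) \<partial>M) \<le> 2"
      unfolding T_def
    proof (rule SGb_derive[OF Xm])
      show "is_inv_sqrt (p n) (R n) (Sig n)" using R_inv_sqrt by blast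
      show "\<forall>i<p n. \<forall>j<p n. Sig n i j = Sig n j i" using Sig_sym by blast
      show "\<forall>u. norm2_p (p n) (matvec (p n) (Sig n) u) \<le> C_Sig * norm2_p (p n) u" using Sig_op by blast
      show "\<forall>u. norm2_p (p n) u = 1 \<longrightarrow> subgaussian M (\<lambda>\<omega>. inner_p (p n) u (matvec (p n) (R n) (X n i \<omega>)))
                 \<and> psi2_norm M (\<lambda>\<omega>. inner_p (p n) u (matvec (p n) (R n) (X n i \<omega>))) \<le> Cg" using Cg i by blast
      show "Bb \<ge> 1" by (rule Bb1)
    qed
    have beb: "\<forall>l<K. norm2_p (p n) (\<lambda>j. beta n l j - beta n k j) \<le> Bb"
    proof (intro allI impI)
      fix l assume "l < K"
      then have "norm2_p (p n) (\<lambda>j. beta n l j - beta n k j) \<le> Cb" using Cb k by blast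
      then show "norm2_p (p n) (\<lambda>j. beta n l j - beta n k j) \<le> Bb" unfolding Bb_def by (simp add: le_max_iff_disj)
    qed
    have mod: "distr M (PiM {..<p n} (\<lambda>_. borel) \<Otimes>\<^sub>M borel) (\<lambda>\<omega>. (X n i \<omega>, Y n i \<omega>)) =
                  bind (distr M (PiM {..<p n} (\<lambda>_. borel)) (X n i))
                    (\<lambda>x. distr (density lborel (\<lambda>y. ennreal (moe_density K (p n) (alpha n) (beta n) sig x y)))
                               (PiM {..<p n} (\<lambda>_. borel) \<Otimes>\<^sub>M borel) (\<lambda>y. (x, y)))" using model i by blast
    note sm = sample_moments[OF Xm Ym mod K0 k sig_pos T0 Bb1 SGb beb]
    show ?thesis using sm unfolding H1_def H2_def C1_def C2_def Lp_def by simp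
  qed
  have EA1: "(\<integral>\<^sup>+\<omega>. ennreal (c * A1 n \<omega>) \<partial>M) \<le> ennreal (c * (C1 * Lp n))" if c: "c \<ge> 0" for c n
    unfolding A1_def using mom H1m H10 C10 Lp1[of n] c by (intro avg_moment) auto
  have EA2: "(\<integral>\<^sup>+\<omega>. ennreal (c * A2 n \<omega>) \<partial>M) \<le> ennreal (c * (C2 * (Lp n)\<^sup>2))" if c: "c \<ge> 0" for c n
    unfolding A2_def using mom H2m H20 C20 c by (intro avg_moment) auto
  have rt: "(\<lambda>n. eta n * Lp n) \<longlonglongrightarrow> 0" unfolding Lp_def by (rule rate[OF p_lim logp eta_rate])
  show ?thesis unfolding o_p1_def Zf_def[symmetric]
  proof (intro allI impI)
    fix \<epsilon> :: real assume \<epsilon>: "\<epsilon> > 0"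
    show "(\<lambda>n. measure M {\<omega> \<in> space M. \<bar>Zf n \<omega>\<bar> > \<epsilon>}) \<longlonglongrightarrow> 0"
    proof (rule LIMSEQ_I)
      fix e :: real assume e: "e > 0"
      obtain Cc N1 where N1: "\<forall>n\<ge>N1. measure M {\<omega> \<in> space M. \<bar>Dn n \<omega>\<bar> > Cc * eta n} < e/2"
      proof -
        have e2: "e/2 > 0" using e by simp
        show ?thesis using A1[unfolded O_p_def, rule_format, OF e2] that unfolding Dn_def by blast
      qed
      define B where "B = (\<lambda>n. \<bar>Cc\<bar> * \<bar>eta n\<bar>)"
      have B0: "B n \<ge> 0" for n unfolding B_def by simp
      have BL: "(\<lambda>n. B n * Lp n) \<longlonglongrightarrow> 0"
      proof -
        have "(\<lambda>n. \<bar>Cc\<bar> * \<bar>eta n * Lp n\<bar>) \<longlonglongrightarrow> \<bar>Cc\<bar> * \<bar>0\<bar>" by (intro tendsto_intros rt)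
        moreover have "\<bar>Cc\<bar> * \<bar>eta n * Lp n\<bar> = B n * Lp n" for n unfolding B_def using Lp1[of n] by (simp add: abs_mult)
        ultimately show ?thesis by simp
      qed
      have ev1: "eventually (\<lambda>n. B n * Lp n < min (s/2) (e * \<epsilon> / (8 * (Cs * C1 + 1)))) sequentially"
      proof -
        have pp: "0 < Cs * C1 + 1" using mult_nonneg_nonneg[OF Cs0 C10] by linarith
        have "0 < e * \<epsilon> / (8 * (Cs * C1 + 1))"
          using e \<epsilon> pp by (intro divide_pos_pos mult_pos_pos) auto
        then have "0 < min (s/2) (e * \<epsilon> / (8 * (Cs * C1 + 1)))" using s0 by simp
        then show ?thesis by (rule order_tendstoD(2)[OF BL])
      qed
      have ev2: "eventually (\<lambda>n. (B n * Lp n)\<^sup>2 < e * \<epsilon> / (8 * (Cs * C2 + 1))) sequentially"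
      proof -
        have "(\<lambda>n. (B n * Lp n)\<^sup>2) \<longlonglongrightarrow> 0\<^sup>2" by (intro tendsto_intros BL)
        then have t: "(\<lambda>n. (B n * Lp n)\<^sup>2) \<longlonglongrightarrow> 0" by simp
        have pp: "0 < Cs * C2 + 1" using mult_nonneg_nonneg[OF Cs0 C20] by linarith
        have "0 < e * \<epsilon> / (8 * (Cs * C2 + 1))"
          using e \<epsilon> pp by (intro divide_pos_pos mult_pos_pos) auto
        then show ?thesis by (rule order_tendstoD(2)[OF t])
      qed
      obtain N2 where N2: "\<forall>n\<ge>N2. B n * Lp n < min (s/2) (e * \<epsilon> / (8 * (Cs * C1 + 1)))
           \<and> (B n * Lp n)\<^sup>2 < e * \<epsilon> / (8 * (Cs * C2 + 1))"
        using eventually_conj[OF ev1 ev2] unfolding eventually_sequentially by blast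
      show "\<exists>no. \<forall>n\<ge>no. norm (measure M {\<omega> \<in> space M. \<bar>Zf n \<omega>\<bar> > \<epsilon>} - 0) < e"
      proof (intro exI[of _ "max N1 N2"] allI impI)
        fix n assume n: "n \<ge> max N1 N2"
        have n1: "n \<ge> N1" and n2: "n \<ge> N2" using n by auto
        have BLs: "B n * Lp n < s/2" and BL1: "B n * Lp n < e * \<epsilon> / (8 * (Cs * C1 + 1))"
          and BL2: "(B n * Lp n)\<^sup>2 < e * \<epsilon> / (8 * (Cs * C2 + 1))" using N2 n2 by auto
        have BBL: "B n \<le> B n * Lp n" using B0[of n] Lp1[of n] by (simp add: mult_le_cancel_left1)
        have Bs: "B n \<le> s/2" using BBL BLs by linarith
        define S1 where "S1 = {\<omega> \<in> space M. \<bar>Dn n \<omega>\<bar> > Cc * eta n}"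
        define S2 where "S2 = {\<omega> \<in> space M. (Cs * B n) * A1 n \<omega> \<ge> \<epsilon>/2}"
        define S3 where "S3 = {\<omega> \<in> space M. (Cs * (B n)\<^sup>2) * A2 n \<omega> \<ge> \<epsilon>/2}"
        have [measurable]: "Dn n \<in> borel_measurable M" "A1 n \<in> borel_measurable M" "A2 n \<in> borel_measurable M"
          using Dnm A1m A2m by auto
        have S1m: "S1 \<in> sets M" unfolding S1_def by measurable
        have S2m: "S2 \<in> sets M" unfolding S2_def by measurable
        have S3m: "S3 \<in> sets M" unfolding S3_def by measurable
        have sub: "{\<omega> \<in> space M. \<bar>Zf n \<omega>\<bar> > \<epsilon>} \<subseteq> S1 \<union> S2 \<union> S3"
        proof
          fix \<omega> assume w: "\<omega> \<in> {\<omega> \<in> space M. \<bar>Zf n \<omega>\<bar> > \<epsilon>}"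
          show "\<omega> \<in> S1 \<union> S2 \<union> S3"
          proof (cases "\<omega> \<in> S1")
            case False
            have DB: "Dn n \<omega> \<le> B n"
            proof -
              have "\<bar>Dn n \<omega>\<bar> \<le> Cc * eta n" using False w unfolding S1_def by auto
              also have "\<dots> \<le> B n" unfolding B_def by (simp add: abs_mult[symmetric])
              finally show ?thesis by simp
            qed
            have "Zf n \<omega> \<le> Cs * (Dn n \<omega> * A1 n \<omega> + (Dn n \<omega>)\<^sup>2 * A2 n \<omega>)"
              using DB Bs by (intro Zb) linarith
            also have "\<dots> \<le> Cs * (B n * A1 n \<omega> + (B n)\<^sup>2 * A2 n \<omega>)"
              using DB Dn0[of n \<omega>] A10[of n \<omega>] A20[of n \<omega>] Cs0
              by (intro mult_left_mono add_mono mult_right_mono power_mono) auto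
            finally have "\<epsilon> < (Cs * B n) * A1 n \<omega> + (Cs * (B n)\<^sup>2) * A2 n \<omega>"
              using w Zf0[of n \<omega>] by (simp add: algebra_simps)
            then have "(Cs * B n) * A1 n \<omega> \<ge> \<epsilon>/2 \<or> (Cs * (B n)\<^sup>2) * A2 n \<omega> \<ge> \<epsilon>/2" by linarith
            then show ?thesis using w unfolding S2_def S3_def by auto
          qed simp
        qed
        have m2: "measure M S2 \<le> (Cs * B n * (C1 * Lp n)) / (\<epsilon>/2)"
          unfolding S2_def
        proof (rule markov_meas)
          show "(\<lambda>\<omega>. Cs * B n * A1 n \<omega>) \<in> borel_measurable M" by measurable
          show "0 < \<epsilon>/2" using \<epsilon> by simp
          show "0 \<le> Cs * B n * (C1 * Lp n)" using Cs0 B0[of n] C10 Lp1[of n] by simp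
          show "(\<integral>\<^sup>+\<omega>. ennreal (Cs * B n * A1 n \<omega>) \<partial>M) \<le> ennreal (Cs * B n * (C1 * Lp n))"
            using EA1[of "Cs * B n" n] Cs0 B0[of n] by simp
        qed
        have m3: "measure M S3 \<le> (Cs * (B n)\<^sup>2 * (C2 * (Lp n)\<^sup>2)) / (\<epsilon>/2)"
          unfolding S3_def
        proof (rule markov_meas)
          show "(\<lambda>\<omega>. Cs * (B n)\<^sup>2 * A2 n \<omega>) \<in> borel_measurable M" by measurable
          show "0 < \<epsilon>/2" using \<epsilon> by simp
          show "0 \<le> Cs * (B n)\<^sup>2 * (C2 * (Lp n)\<^sup>2)" using Cs0 C20 by simp
          show "(\<integral>\<^sup>+\<omega>. ennreal (Cs * (B n)\<^sup>2 * A2 n \<omega>) \<partial>M) \<le> ennreal (Cs * (B n)\<^sup>2 * (C2 * (Lp n)\<^sup>2))"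
            using EA2[of "Cs * (B n)\<^sup>2" n] Cs0 by simp
        qed
        have m2': "(Cs * B n * (C1 * Lp n)) / (\<epsilon>/2) < e/4"
        proof -
          have q0: "0 \<le> Cs * C1" using Cs0 C10 by simp
          have "(Cs * B n * (C1 * Lp n)) / (\<epsilon>/2) = (2 * (Cs * C1) / \<epsilon>) * (B n * Lp n)" by (simp add: field_simps)
          also have "\<dots> \<le> (2 * (Cs * C1) / \<epsilon>) * (e * \<epsilon> / (8 * (Cs * C1 + 1)))"
            using BL1 q0 \<epsilon> by (intro mult_left_mono) auto
          also have "\<dots> = (e/4) * ((Cs * C1) / (Cs * C1 + 1))" using \<epsilon> q0 by (simp add: field_simps)
          also have "\<dots> < e/4"
          proof -
            have "(Cs * C1) / (Cs * C1 + 1) < 1" using q0 by simp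
            then have "(e/4) * ((Cs * C1) / (Cs * C1 + 1)) < (e/4) * 1"
              by (rule mult_strict_left_mono) (use e in simp)
            then show ?thesis by (simp only: mult_1_right)
          qed
          finally show ?thesis .
        qed
        have m3': "(Cs * (B n)\<^sup>2 * (C2 * (Lp n)\<^sup>2)) / (\<epsilon>/2) < e/4"
        proof -
          have q0: "0 \<le> Cs * C2" using Cs0 C20 by simp
          have "(Cs * (B n)\<^sup>2 * (C2 * (Lp n)\<^sup>2)) / (\<epsilon>/2) = (2 * (Cs * C2) / \<epsilon>) * (B n * Lp n)\<^sup>2"
            by (simp add: field_simps power_mult_distrib)
          also have "\<dots> \<le> (2 * (Cs * C2) / \<epsilon>) * (e * \<epsilon> / (8 * (Cs * C2 + 1)))"
            using BL2 q0 \<epsilon> by (intro mult_left_mono) auto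
          also have "\<dots> = (e/4) * ((Cs * C2) / (Cs * C2 + 1))" using \<epsilon> q0 by (simp add: field_simps)
          also have "\<dots> < e/4"
          proof -
            have "(Cs * C2) / (Cs * C2 + 1) < 1" using q0 by simp
            then have "(e/4) * ((Cs * C2) / (Cs * C2 + 1)) < (e/4) * 1"
              by (rule mult_strict_left_mono) (use e in simp)
            then show ?thesis by (simp only: mult_1_right)
          qed
          finally show ?thesis .
        qed
        have "measure M {\<omega> \<in> space M. \<bar>Zf n \<omega>\<bar> > \<epsilon>} \<le> measure M (S1 \<union> S2 \<union> S3)"
          using sub S1m S2m S3m by (intro finite_measure_mono) auto
        also have "\<dots> \<le> measure M (S1 \<union> S2) + measure M S3" using S1m S2m S3m by (intro measure_Un_le) auto
        also have "\<dots> \<le> measure M S1 + measure M S2 + measure M S3"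
          using measure_Un_le[OF S1m S2m] by simp
        also have "\<dots> < e/2 + e/4 + e/4"
          using N1 n1 m2 m2' m3 m3' unfolding S1_def by fastforce
        finally show "norm (measure M {\<omega> \<in> space M. \<bar>Zf n \<omega>\<bar> > \<epsilon>} - 0) < e" by simp
      qed
    qed
  qed
qed


end
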